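(* For $\xi\in\mathbb R$ let $g_\xi(x)=e^{2\pi i\xi x}$ on $[-1/2,1/2]$ and let $T_{g_\xi}$ be the Toeplitz operator with symbol $g_\xi$. Then: (1) if $\xi<-1/2$, $T_{g_\xi}$ is not injective; (2) if $-1/2<\xi<1/2$, $T_{g_\xi}$ is invertible; (3) if $\xi=-1/2+n$ for some $n\in\{0,1,2,\dots\}$, $T_{g_\xi}$ is injective but not bounded below; (4) if $\xi>1/2$ and $\xi\neq -1/2+n$ for all $n\in\{0,1,2,\dots\}$, $T_{g_\xi}$ is injective and bounded below but not surjective.
   Context: For $\phi\in L^1[-1/2,1/2]$, $\widehat\phi(n)=\int_{-1/2}^{1/2}\phi(x)e^{-2\pi i n x}\,dx$. Let $\tilde H^2=\{f\in L^2[-1/2,1/2]:\widehat f(n)=0 \text{ for all } n<0\}$ and $P_+$ the orthogonal projection of $L^2[-1/2,1/2]$ onto $\tilde H^2$. For $\phi\in L^\infty[-1/2,1/2]$ the Toeplitz operator $T_\phi:\tilde H^2\to\tilde H^2$ is $T_\phi f=P_+(\phi f)$ (matrix entries $\widehat\phi(j-k)$, $j,k\ge0$, in the basis $\{e^{2\pi i n x}\}_{n\ge0}$). An operator $T$ is bounded below if there is $c>0$ with $\|Tf\|\ge c\|f\|$ for all $f$. *)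

theory Defs
  imports "HOL-Analysis.Analysis"
begin

definition fourier_coeff :: "(real \<Rightarrow> complex) \<Rightarrow> int \<Rightarrow> complex" where
  "fourier_coeff \<phi> n = integral {-1/2..1/2} (\<lambda>x. \<phi> x * exp (- (2 * pi * \<i> * of_int n * of_real x)))"

text \<open>The Hardy space is identified with l^2(N) via the basis e^{2 pi i n x}, n >= 0.\<close>
definition is_l2 :: "(nat \<Rightarrow> complex) \<Rightarrow> bool" where
  "is_l2 f \<longleftrightarrow> summable (\<lambda>n. (cmod (f n))\<^sup>2)"

definition l2_norm :: "(nat \<Rightarrow> complex) \<Rightarrow> real" where
  "l2_norm f = sqrt (\<Sum>n. (cmod (f n))\<^sup>2)"

definition toeplitz :: "(real \<Rightarrow> complex) \<Rightarrow> (nat \<Rightarrow> complex) \<Rightarrow> (nat \<Rightarrow> complex)" where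
  "toeplitz \<phi> f = (\<lambda>j. \<Sum>k. fourier_coeff \<phi> (int j - int k) * f k)"

definition toeplitz_injective :: "(real \<Rightarrow> complex) \<Rightarrow> bool" where
  "toeplitz_injective \<phi> \<longleftrightarrow> (\<forall>f. is_l2 f \<and> toeplitz \<phi> f = (\<lambda>_. 0) \<longrightarrow> f = (\<lambda>_. 0))"

definition toeplitz_bounded_below :: "(real \<Rightarrow> complex) \<Rightarrow> bool" where
  "toeplitz_bounded_below \<phi> \<longleftrightarrow>
     (\<exists>c>0. \<forall>f. is_l2 f \<longrightarrow> l2_norm (toeplitz \<phi> f) \<ge> c * l2_norm f)"

definition toeplitz_surjective :: "(real \<Rightarrow> complex) \<Rightarrow> bool" where
  "toeplitz_surjective \<phi> \<longleftrightarrow> (\<forall>g. is_l2 g \<longrightarrow> (\<exists>f. is_l2 f \<and> toeplitz \<phi> f = g))"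

definition toeplitz_invertible :: "(real \<Rightarrow> complex) \<Rightarrow> bool" where
  "toeplitz_invertible \<phi> \<longleftrightarrow>
     (\<exists>S. (\<forall>g. is_l2 g \<longrightarrow> is_l2 (S g) \<and> toeplitz \<phi> (S g) = g)
        \<and> (\<forall>f. is_l2 f \<longrightarrow> S (toeplitz \<phi> f) = f)
        \<and> (\<exists>C. \<forall>g. is_l2 g \<longrightarrow> l2_norm (S g) \<le> C * l2_norm g))"

definition g_sym :: "real \<Rightarrow> real \<Rightarrow> complex" where
  "g_sym \<xi> x = exp (2 * pi * \<i> * of_real \<xi> * of_real x)"

end

theory Submission
  imports Defs "HOL-Computational_Algebra.Formal_Power_Series"
begin

definition II :: "real set" where "II = {-1/2..1/2}"

lemma mem_II: "x \<in> II \<longleftrightarrow> -1/2 \<le> x \<and> x \<le> 1/2"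
  unfolding II_def by auto

definition ex :: "real \<Rightarrow> real \<Rightarrow> complex" where
  "ex t x = exp (complex_of_real (2*pi*t) * \<i> * complex_of_real x)"

lemma ex_add: "ex a x * ex b x = ex (a+b) x"
  unfolding ex_def by (simp add: exp_add[symmetric] distrib_left distrib_right algebra_simps)

lemma cnj_ex: "cnj (ex t x) = ex (-t) x"
  unfolding ex_def exp_cnj by simp

lemma norm_ex[simp]: "cmod (ex t x) = 1"
  unfolding ex_def by (simp add: norm_exp_eq_Re)

lemma ex_0[simp]: "ex 0 x = 1"
  unfolding ex_def by simp

lemma continuous_on_ex[continuous_intros]: "continuous_on S (ex t)"
  unfolding ex_def by (intro continuous_intros)

lemma g_sym_ex: "g_sym \<xi> = ex \<xi>"
  unfolding g_sym_def ex_def by (auto simp: fun_eq_iff algebra_simps)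

lemma fc_ex: "fourier_coeff \<phi> n = integral II (\<lambda>x. \<phi> x * cnj (ex (of_int n) x))"
  unfolding fourier_coeff_def cnj_ex II_def by (simp add: ex_def algebra_simps)

lemma integral_ex_int: "integral II (ex (of_int m)) = (if m = 0 then 1 else 0)"
proof (cases "m = 0")
  case True
  have "ex 0 = (\<lambda>x. 1)" by auto
  then show ?thesis using True integral_unique[OF has_integral_const_real[where a="-1/2" and b="1/2" and c="1::complex"]] by (simp add: II_def)
next
  case False
  define a where "a = complex_of_real (2 * pi * of_int m) * \<i>"
  have a0: "a \<noteq> 0" using False by (simp add: a_def)
  have "\<And>t. t \<in> {-1/2..1/2} \<Longrightarrow> ((\<lambda>x. exp (a * x) / a) has_vector_derivative exp (a * t)) (at t within {-1/2..1/2})"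
    using a0
    by (intro derivative_eq_intros has_complex_derivative_imp_has_vector_derivative [unfolded o_def] | simp)+
  then have "((\<lambda>t. exp(a * of_real t)) has_integral exp(a * of_real (1/2))/a - exp(a * of_real (-1/2))/a) II"
    unfolding II_def by (intro fundamental_theorem_of_calculus) auto
  moreover have "exp(a * of_real (1/2)) = exp(a * of_real (-1/2))"
  proof -
    have "exp(a * of_real (1/2)) = exp(a * of_real (-1/2)) * exp (a)"
      by (simp add: exp_add[symmetric] algebra_simps)
    moreover have "exp a = 1" unfolding a_def
      using exp_integer_2pi[of "of_int m"] by (simp add: algebra_simps)
    ultimately show ?thesis by simp
  qed
  ultimately have "((\<lambda>t. exp(a * of_real t)) has_integral 0) II" by simp
  moreover have "(\<lambda>t. exp(a * of_real t)) = ex (of_int m)"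
    by (auto simp: fun_eq_iff ex_def a_def)
  ultimately show ?thesis using False by (simp add: integral_unique)
qed

lemma integral_const_II: "integral II (\<lambda>x. c) = (c::'a::real_normed_vector)"
  using integral_unique[OF has_integral_const_real[where a="-1/2" and b="1/2" and c=c]] by (simp add: II_def)

definition IP :: "(real \<Rightarrow> complex) \<Rightarrow> (real \<Rightarrow> complex) \<Rightarrow> complex" where
  "IP h1 h2 = integral II (\<lambda>x. h1 x * cnj (h2 x))"

abbreviation cont :: "(real \<Rightarrow> complex) \<Rightarrow> bool" where "cont h \<equiv> continuous_on II h"

lemma integrable_II: "continuous_on II (h::real\<Rightarrow>'a::banach) \<Longrightarrow> h integrable_on II"
  unfolding II_def using integrable_continuous_interval by blast

lemma IP_ex: "IP (ex (of_int n)) (ex (of_int m)) = (if n = m then 1 else 0)"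
proof -
  have "(\<lambda>x. ex (of_int n) x * cnj (ex (of_int m) x)) = ex (of_int (n - m))"
    by (auto simp: fun_eq_iff cnj_ex ex_add)
  then show ?thesis unfolding IP_def using integral_ex_int[of "n - m"] by simp
qed

lemma IP_sum_left:
  assumes "finite S" "\<And>i. i \<in> S \<Longrightarrow> cont (u i)" "cont h"
  shows "IP (\<lambda>x. \<Sum>i\<in>S. a i * u i x) h = (\<Sum>i\<in>S. a i * IP (u i) h)"
proof -
  have "IP (\<lambda>x. \<Sum>i\<in>S. a i * u i x) h = integral II (\<lambda>x. \<Sum>i\<in>S. a i * (u i x * cnj (h x)))"
    unfolding IP_def by (simp only: sum_distrib_right mult.assoc)
  also have "\<dots> = (\<Sum>i\<in>S. integral II (\<lambda>x. a i * (u i x * cnj (h x))))"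
    using assms by (intro integral_sum integrable_II continuous_intros) auto
  also have "\<dots> = (\<Sum>i\<in>S. a i * IP (u i) h)"
    unfolding IP_def by (intro sum.cong refl integral_mult_right)
  finally show ?thesis .
qed

lemma IP_swap: "IP u v = cnj (IP v u)"
  unfolding IP_def integral_cnj by (simp add: mult.commute)

lemma IP_sum_right:
  assumes "finite S" "\<And>i. i \<in> S \<Longrightarrow> cont (u i)" "cont h"
  shows "IP h (\<lambda>x. \<Sum>i\<in>S. a i * u i x) = (\<Sum>i\<in>S. cnj (a i) * IP h (u i))"
proof -
  have "IP h (\<lambda>x. \<Sum>i\<in>S. a i * u i x) = cnj (\<Sum>i\<in>S. a i * IP (u i) h)"
    by (subst IP_swap) (simp add: IP_sum_left[OF assms])
  also have "\<dots> = (\<Sum>i\<in>S. cnj (a i) * IP h (u i))"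
    by (simp add: IP_swap[of h])
  finally show ?thesis .
qed

lemma IP_diff_left: "cont f \<Longrightarrow> cont g \<Longrightarrow> cont h \<Longrightarrow> IP (\<lambda>x. f x - g x) h = IP f h - IP g h"
  unfolding IP_def left_diff_distrib by (intro integral_diff integrable_II continuous_intros) auto

lemma IP_diff_right: "cont f \<Longrightarrow> cont g \<Longrightarrow> cont h \<Longrightarrow> IP h (\<lambda>x. f x - g x) = IP h f - IP h g"
  unfolding IP_def complex_cnj_diff right_diff_distrib by (intro integral_diff integrable_II continuous_intros) auto

lemma IP_self: "cont h \<Longrightarrow> IP h h = of_real (integral II (\<lambda>x. (cmod (h x))\<^sup>2))"
proof -
  assume h: "cont h"
  have i: "(\<lambda>x. (cmod (h x))\<^sup>2) integrable_on II"
    using h by (intro integrable_II continuous_intros)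
  have "IP h h = integral II (\<lambda>x. of_real ((cmod (h x))\<^sup>2))"
    unfolding IP_def complex_norm_square ..
  also have "\<dots> = of_real (integral II (\<lambda>x. (cmod (h x))\<^sup>2))"
    by (rule integral_unique[OF has_integral_of_real[OF integrable_integral[OF i]]])
  finally show ?thesis .
qed

lemma bessel:
  assumes h: "cont h" and J: "finite J"
  shows "(\<Sum>n\<in>J. (cmod (IP h (ex (of_int n))))\<^sup>2) \<le> integral II (\<lambda>x. (cmod (h x))\<^sup>2)"
proof -
  define a where "a n = IP h (ex (of_int n))" for n
  define P where "P x = (\<Sum>n\<in>J. a n * ex (of_int n) x)" for x
  define S where "S = (\<Sum>n\<in>J. (cmod (a n))\<^sup>2)"
  have cP: "cont P" unfolding P_def by (intro continuous_intros)
  have cE: "\<And>n. cont (ex (of_int n))" by (intro continuous_intros)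
  have sq: "\<And>z. z * cnj z = of_real ((cmod z)\<^sup>2)" by (metis complex_norm_square)
  have hP: "IP h P = of_real S"
    unfolding P_def using J cE h
    by (simp add: IP_sum_right S_def a_def[symmetric] mult.commute sq)
  have Ph: "IP P h = of_real S"
    using hP by (subst IP_swap) simp
  have PP: "IP P P = of_real S"
  proof -
    have "IP P P = IP (\<lambda>x. \<Sum>n\<in>J. a n * ex (of_int n) x) P"
      by (simp add: P_def[abs_def])
    also have "\<dots> = (\<Sum>n\<in>J. a n * IP (ex (of_int n)) P)"
      using cE cP by (intro IP_sum_left[OF J]) simp_all
    also have "\<dots> = (\<Sum>n\<in>J. a n * (\<Sum>m\<in>J. cnj (a m) * (if n = m then 1 else 0)))"
      unfolding P_def using J cE by (simp add: IP_sum_right IP_ex)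
    also have "\<dots> = (\<Sum>n\<in>J. a n * cnj (a n))"
      using J by (intro sum.cong refl) (simp add: sum.delta sum.delta' if_distrib cong: if_cong)
    also have "\<dots> = of_real S" by (simp add: S_def sq)
    finally show ?thesis .
  qed
  have "IP (\<lambda>x. h x - P x) (\<lambda>x. h x - P x) = IP h h - of_real S"
    using h cP hP Ph PP by (simp add: IP_diff_left IP_diff_right continuous_intros)
  then have "of_real (integral II (\<lambda>x. (cmod (h x - P x))\<^sup>2)) = complex_of_real (integral II (\<lambda>x. (cmod (h x))\<^sup>2) - S)"
    using h cP by (simp add: IP_self continuous_intros)
  then have eq: "integral II (\<lambda>x. (cmod (h x - P x))\<^sup>2) = integral II (\<lambda>x. (cmod (h x))\<^sup>2) - S"
    using of_real_eq_iff by blast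
  have "0 \<le> integral II (\<lambda>x. (cmod (h x - P x))\<^sup>2)"
    using h cP by (intro integral_nonneg integrable_II continuous_intros) auto
  then show ?thesis using eq by (simp add: S_def a_def)
qed

definition trunc :: "nat \<Rightarrow> (nat \<Rightarrow> complex) \<Rightarrow> nat \<Rightarrow> complex" where
  "trunc N f k = (if k < N then f k else 0)"

definition TP :: "nat \<Rightarrow> (nat \<Rightarrow> complex) \<Rightarrow> real \<Rightarrow> complex" where
  "TP N f x = (\<Sum>k<N. f k * ex (real k) x)"

lemma cont_TP[continuous_intros]: "continuous_on S (TP N f)"
  unfolding TP_def by (intro continuous_intros)

lemma fc_IP: "fourier_coeff \<phi> n = IP \<phi> (ex (of_int n))"
  unfolding fc_ex IP_def ..

lemma IP_ex_nat: "IP (ex (real n)) (ex (real m)) = (if n = m then 1 else 0)"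
  using IP_ex[of "int n" "int m"] by simp

lemma cont_bounded: "cont \<phi> \<Longrightarrow> \<exists>M. \<forall>x\<in>II. cmod (\<phi> x) \<le> M"
proof -
  assume "cont \<phi>"
  then have "bounded (\<phi> ` II)" by (intro compact_imp_bounded compact_continuous_image) (auto simp: II_def)
  then show ?thesis by (auto simp: bounded_iff)
qed

lemma toeplitz_trunc: "toeplitz \<phi> (trunc N f) j = (\<Sum>k<N. fourier_coeff \<phi> (int j - int k) * f k)"
  unfolding toeplitz_def trunc_def
  by (subst suminf_finite[of "{..<N}"]) (auto intro!: sum.cong)

lemma IP_ex_shift: "IP (\<lambda>x. \<phi> x * ex (real k) x) (ex (real j)) = fourier_coeff \<phi> (int j - int k)"
proof -
  have eq: "(\<lambda>x. \<phi> x * ex (real k) x * cnj (ex (real j) x)) = (\<lambda>x. \<phi> x * cnj (ex (of_int (int j - int k)) x))"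
  proof (rule ext)
    fix x
    have "ex (real k) x * ex (- real j) x = ex (- (real j - real k)) x"
      by (simp add: ex_add)
    then show "\<phi> x * ex (real k) x * cnj (ex (real j) x) = \<phi> x * cnj (ex (of_int (int j - int k)) x)"
      by (simp add: cnj_ex mult.assoc)
  qed
  show ?thesis unfolding fc_ex IP_def eq ..
qed

lemma toeplitz_trunc_IP:
  assumes "cont \<phi>"
  shows "toeplitz \<phi> (trunc N f) j = IP (\<lambda>x. \<phi> x * TP N f x) (ex (real j))"
proof -
  have "IP (\<lambda>x. \<phi> x * TP N f x) (ex (real j)) = IP (\<lambda>x. \<Sum>k<N. f k * (\<phi> x * ex (real k) x)) (ex (real j))"
    unfolding TP_def by (simp add: sum_distrib_left algebra_simps)
  also have "\<dots> = (\<Sum>k<N. f k * IP (\<lambda>x. \<phi> x * ex (real k) x) (ex (real j)))"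
    using assms by (intro IP_sum_left[where u="\<lambda>k x. \<phi> x * ex (real k) x"]) (auto intro!: continuous_intros)
  also have "\<dots> = (\<Sum>k<N. fourier_coeff \<phi> (int j - int k) * f k)"
    by (simp add: IP_ex_shift mult.commute)
  finally show ?thesis by (simp add: toeplitz_trunc)
qed

lemma TP_coeff: "m < N \<Longrightarrow> IP (TP N f) (ex (real m)) = f m"
proof -
  assume m: "m < N"
  have "IP (TP N f) (ex (real m)) = (\<Sum>k<N. f k * IP (ex (real k)) (ex (real m)))"
    unfolding TP_def[abs_def] by (intro IP_sum_left[where u="\<lambda>k. ex (real k)"]) (auto intro!: continuous_intros)
  also have "\<dots> = f m" using m by (simp add: IP_ex_nat if_distrib cong: if_cong)
  finally show ?thesis .
qed

lemma TP_norm: "IP (TP N f) (TP N f) = of_real (\<Sum>k<N. (cmod (f k))\<^sup>2)"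
proof -
  have "IP (TP N f) (TP N f) = (\<Sum>k<N. f k * IP (ex (real k)) (TP N f))"
    unfolding TP_def[abs_def] by (intro IP_sum_left[where u="\<lambda>k. ex (real k)"]) (auto intro!: continuous_intros)
  also have "\<dots> = (\<Sum>k<N. f k * cnj (f k))"
    by (intro sum.cong refl) (simp add: IP_swap[of "ex _"] TP_coeff)
  also have "\<dots> = of_real (\<Sum>k<N. (cmod (f k))\<^sup>2)"
    by (simp only: of_real_sum complex_norm_square)
  finally show ?thesis .
qed

lemma integral_TP_sq: "integral II (\<lambda>x. (cmod (TP N f x))\<^sup>2) = (\<Sum>k<N. (cmod (f k))\<^sup>2)"
proof -
  have "IP (TP N f) (TP N f) = of_real (integral II (\<lambda>x. (cmod (TP N f x))\<^sup>2))"
    by (rule IP_self) (intro continuous_intros)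
  then show ?thesis using TP_norm[of N f] of_real_eq_iff by metis
qed

lemma toeplitz_trunc_bound:
  assumes c: "cont \<phi>" and M: "\<forall>x\<in>II. cmod (\<phi> x) \<le> M"
  shows "(\<Sum>j<J. (cmod (toeplitz \<phi> (trunc N f) j))\<^sup>2) \<le> M\<^sup>2 * (\<Sum>k<N. (cmod (f k))\<^sup>2)"
proof -
  define h where "h x = \<phi> x * TP N f x" for x
  have ch: "cont h" unfolding h_def using c by (intro continuous_intros) auto
  have "(\<Sum>j<J. (cmod (toeplitz \<phi> (trunc N f) j))\<^sup>2) = (\<Sum>n\<in>int ` {..<J}. (cmod (IP h (ex (of_int n))))\<^sup>2)"
    by (subst sum.reindex) (auto simp: toeplitz_trunc_IP[OF c] h_def[abs_def])
  also have "\<dots> \<le> integral II (\<lambda>x. (cmod (h x))\<^sup>2)" by (rule bessel[OF ch]) auto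
  also have "\<dots> \<le> integral II (\<lambda>x. M\<^sup>2 * (cmod (TP N f x))\<^sup>2)"
  proof (rule integral_le)
    show "(\<lambda>x. (cmod (h x))\<^sup>2) integrable_on II" using ch by (intro integrable_II continuous_intros)
    show "(\<lambda>x. M\<^sup>2 * (cmod (TP N f x))\<^sup>2) integrable_on II" by (intro integrable_II continuous_intros)
    fix x assume x: "x \<in> II"
    have "(cmod (\<phi> x))\<^sup>2 \<le> M\<^sup>2" using M x by (intro power_mono) auto
    then show "(cmod (h x))\<^sup>2 \<le> M\<^sup>2 * (cmod (TP N f x))\<^sup>2"
      unfolding h_def norm_mult power_mult_distrib by (intro mult_right_mono) auto
  qed
  also have "\<dots> = M\<^sup>2 * (\<Sum>k<N. (cmod (f k))\<^sup>2)"
    by (simp add: integral_TP_sq)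
  finally show ?thesis .
qed

lemma row_bound:
  assumes c: "cont \<phi>" and M: "\<forall>x\<in>II. cmod (\<phi> x) \<le> M"
  shows "(\<Sum>k<K. (cmod (fourier_coeff \<phi> (int j - int k)))\<^sup>2) \<le> M\<^sup>2"
proof -
  have inj: "inj_on (\<lambda>k::nat. int j - int k) {..<K}" by (auto simp: inj_on_def)
  have "(\<Sum>k<K. (cmod (fourier_coeff \<phi> (int j - int k)))\<^sup>2) = (\<Sum>n\<in>(\<lambda>k. int j - int k) ` {..<K}. (cmod (IP \<phi> (ex (of_int n))))\<^sup>2)"
    by (subst sum.reindex[OF inj]) (simp add: fc_IP)
  also have "\<dots> \<le> integral II (\<lambda>x. (cmod (\<phi> x))\<^sup>2)" by (rule bessel[OF c]) auto
  also have "\<dots> \<le> integral II (\<lambda>x. M\<^sup>2)"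
  proof (rule integral_le)
    show "(\<lambda>x. (cmod (\<phi> x))\<^sup>2) integrable_on II" using c by (intro integrable_II continuous_intros)
    show "(\<lambda>x. M\<^sup>2) integrable_on II" by (intro integrable_II continuous_intros)
    fix x assume x: "x \<in> II"
    show "(cmod (\<phi> x))\<^sup>2 \<le> M\<^sup>2" using M x by (intro power_mono) auto
  qed
  also have "\<dots> = M\<^sup>2" by (rule integral_const_II)
  finally show ?thesis .
qed

definition nsq :: "(nat \<Rightarrow> complex) \<Rightarrow> real" where "nsq f = (\<Sum>n. (cmod (f n))\<^sup>2)"

lemma l2_norm_nsq: "l2_norm f = sqrt (nsq f)"
  unfolding l2_norm_def nsq_def ..

lemma nsq_nonneg: "is_l2 f \<Longrightarrow> 0 \<le> nsq f"
  unfolding nsq_def is_l2_def by (intro suminf_nonneg) auto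

lemma l2_norm_nonneg: "is_l2 f \<Longrightarrow> 0 \<le> l2_norm f"
  by (simp add: l2_norm_nsq nsq_nonneg)

lemma l2_boundI:
  assumes "\<And>n. (\<Sum>k<n. (cmod (f k))\<^sup>2) \<le> B"
  shows "is_l2 f" "nsq f \<le> B"
proof -
  show s: "is_l2 f" unfolding is_l2_def by (rule summableI_nonneg_bounded[OF _ assms]) auto
  show "nsq f \<le> B" unfolding nsq_def by (rule suminf_le_const[OF s[unfolded is_l2_def] assms])
qed

lemma partial_le_nsq: "is_l2 f \<Longrightarrow> finite A \<Longrightarrow> (\<Sum>k\<in>A. (cmod (f k))\<^sup>2) \<le> nsq f"
  unfolding nsq_def is_l2_def by (rule sum_le_suminf) auto

lemma coord_le: "is_l2 f \<Longrightarrow> cmod (f k) \<le> l2_norm f"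
  using partial_le_nsq[of f "{k}"] by (simp add: l2_norm_nsq real_le_rsqrt)

lemma l2_norm_boundI:
  assumes "\<And>n. sqrt (\<Sum>k<n. (cmod (f k))\<^sup>2) \<le> B"
  shows "is_l2 f" "l2_norm f \<le> B"
proof -
  have B: "0 \<le> B" using assms[of 0] by simp
  have le: "\<And>n. (\<Sum>k<n. (cmod (f k))\<^sup>2) \<le> B\<^sup>2" using assms sqrt_le_D by blast
  show "is_l2 f" by (rule l2_boundI[OF le])
  have "nsq f \<le> B\<^sup>2" by (rule l2_boundI[OF le])
  then have "sqrt (nsq f) \<le> sqrt (B\<^sup>2)" by (rule real_sqrt_le_mono)
  then show "l2_norm f \<le> B" using B by (simp add: l2_norm_nsq)
qed

lemma partial_sqrt_le: "is_l2 f \<Longrightarrow> sqrt (\<Sum>k<n. (cmod (f k))\<^sup>2) \<le> l2_norm f"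
  using partial_le_nsq[of f "{..<n}"] by (simp add: l2_norm_nsq)

lemma cs:
  assumes a: "is_l2 a" and b: "is_l2 b"
  shows "summable (\<lambda>k. cmod (a k * b k))" "summable (\<lambda>k. a k * b k)"
    "cmod (\<Sum>k. a k * b k) \<le> l2_norm a * l2_norm b"
proof -
  have le: "(\<Sum>k<n. cmod (a k * b k)) \<le> l2_norm a * l2_norm b" for n
  proof -
    have "(\<Sum>k<n. cmod (a k * b k)) = (\<Sum>k<n. \<bar>cmod (a k)\<bar> * \<bar>cmod (b k)\<bar>)" by (simp add: norm_mult)
    also have "\<dots> \<le> L2_set (\<lambda>k. cmod (a k)) {..<n} * L2_set (\<lambda>k. cmod (b k)) {..<n}"
      by (rule L2_set_mult_ineq)
    also have "\<dots> \<le> l2_norm a * l2_norm b"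
      using partial_sqrt_le[OF a, of n] partial_sqrt_le[OF b, of n]
      by (intro mult_mono) (auto simp: L2_set_def l2_norm_nonneg[OF a] l2_norm_nonneg[OF b] intro: sum_nonneg)
    finally show ?thesis .
  qed
  show s: "summable (\<lambda>k. cmod (a k * b k))" by (rule summableI_nonneg_bounded[OF _ le]) auto
  show "summable (\<lambda>k. a k * b k)" by (rule summable_norm_cancel[OF s])
  have "cmod (\<Sum>k. a k * b k) \<le> (\<Sum>k. cmod (a k * b k))" by (rule summable_norm[OF s])
  also have "\<dots> \<le> l2_norm a * l2_norm b" by (rule suminf_le_const[OF s le])
  finally show "cmod (\<Sum>k. a k * b k) \<le> l2_norm a * l2_norm b" .
qed

lemma l2_add:
  assumes f: "is_l2 f" and g: "is_l2 g"
  shows "is_l2 (\<lambda>k. f k + g k)" "l2_norm (\<lambda>k. f k + g k) \<le> l2_norm f + l2_norm g"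
proof -
  have le: "sqrt (\<Sum>k<n. (cmod (f k + g k))\<^sup>2) \<le> l2_norm f + l2_norm g" for n
  proof -
    have "sqrt (\<Sum>k<n. (cmod (f k + g k))\<^sup>2) = L2_set (\<lambda>k. cmod (f k + g k)) {..<n}" by (simp add: L2_set_def)
    also have "\<dots> \<le> L2_set (\<lambda>k. cmod (f k) + cmod (g k)) {..<n}"
      by (intro L2_set_mono norm_triangle_ineq) auto
    also have "\<dots> \<le> L2_set (\<lambda>k. cmod (f k)) {..<n} + L2_set (\<lambda>k. cmod (g k)) {..<n}"
      by (rule L2_set_triangle_ineq)
    also have "\<dots> \<le> l2_norm f + l2_norm g"
      using partial_sqrt_le[OF f, of n] partial_sqrt_le[OF g, of n] by (simp add: L2_set_def)
    finally show ?thesis .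
  qed
  show "is_l2 (\<lambda>k. f k + g k)" "l2_norm (\<lambda>k. f k + g k) \<le> l2_norm f + l2_norm g"
    using l2_norm_boundI[OF le] by auto
qed

lemma l2_diff:
  assumes f: "is_l2 f" and g: "is_l2 g"
  shows "is_l2 (\<lambda>k. f k - g k)" "l2_norm (\<lambda>k. f k - g k) \<le> l2_norm f + l2_norm g"
proof -
  have le: "sqrt (\<Sum>k<n. (cmod (f k - g k))\<^sup>2) \<le> l2_norm f + l2_norm g" for n
  proof -
    have "sqrt (\<Sum>k<n. (cmod (f k - g k))\<^sup>2) = L2_set (\<lambda>k. cmod (f k - g k)) {..<n}" by (simp add: L2_set_def)
    also have "\<dots> \<le> L2_set (\<lambda>k. cmod (f k) + cmod (g k)) {..<n}"
      by (intro L2_set_mono norm_triangle_ineq4) auto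
    also have "\<dots> \<le> L2_set (\<lambda>k. cmod (f k)) {..<n} + L2_set (\<lambda>k. cmod (g k)) {..<n}"
      by (rule L2_set_triangle_ineq)
    also have "\<dots> \<le> l2_norm f + l2_norm g"
      using partial_sqrt_le[OF f, of n] partial_sqrt_le[OF g, of n] by (simp add: L2_set_def)
    finally show ?thesis .
  qed
  show "is_l2 (\<lambda>k. f k - g k)" "l2_norm (\<lambda>k. f k - g k) \<le> l2_norm f + l2_norm g"
    using l2_norm_boundI[OF le] by auto
qed

lemma l2_scale:
  assumes f: "is_l2 f"
  shows "is_l2 (\<lambda>k. c * f k)" "nsq (\<lambda>k. c * f k) = (cmod c)\<^sup>2 * nsq f"
    "l2_norm (\<lambda>k. c * f k) = cmod c * l2_norm f"
proof -
  have eq: "(\<lambda>k. (cmod (c * f k))\<^sup>2) = (\<lambda>k. (cmod c)\<^sup>2 * (cmod (f k))\<^sup>2)"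
    by (simp add: norm_mult power_mult_distrib)
  show "is_l2 (\<lambda>k. c * f k)" using f unfolding is_l2_def eq by (rule summable_mult)
  show n: "nsq (\<lambda>k. c * f k) = (cmod c)\<^sup>2 * nsq f"
    using f unfolding nsq_def is_l2_def eq by (rule suminf_mult)
  show "l2_norm (\<lambda>k. c * f k) = cmod c * l2_norm f"
    unfolding l2_norm_nsq n by (simp add: real_sqrt_mult)
qed

lemma l2_zero: "is_l2 (\<lambda>k. 0)" "nsq (\<lambda>k. 0) = 0" "l2_norm (\<lambda>k. 0) = 0"
  by (auto simp: is_l2_def nsq_def l2_norm_def)

lemma l2_eq_0: "is_l2 f \<Longrightarrow> l2_norm f = 0 \<Longrightarrow> f = (\<lambda>_. 0)"
proof -
  assume f: "is_l2 f" and z: "l2_norm f = 0"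
  then have "nsq f = 0" by (simp add: l2_norm_nsq)
  then have "\<forall>n. (cmod (f n))\<^sup>2 = 0"
    using f unfolding nsq_def is_l2_def by (subst (asm) suminf_eq_zero_iff) auto
  then show ?thesis by auto
qed

lemma l2_trunc: "is_l2 (trunc N f)" "nsq (trunc N f) = (\<Sum>k<N. (cmod (f k))\<^sup>2)"
proof -
  show "nsq (trunc N f) = (\<Sum>k<N. (cmod (f k))\<^sup>2)"
    unfolding nsq_def trunc_def by (subst suminf_finite[of "{..<N}"]) auto
  have "(\<Sum>k<n. (cmod (trunc N f k))\<^sup>2) \<le> (\<Sum>k<N. (cmod (f k))\<^sup>2)" for n
  proof -
    have "(\<Sum>k<n. (cmod (trunc N f k))\<^sup>2) = (\<Sum>k\<in>{..<n}\<inter>{..<N}. (cmod (f k))\<^sup>2)"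
      unfolding trunc_def by (rule sum.mono_neutral_cong_right) auto
    also have "\<dots> \<le> (\<Sum>k<N. (cmod (f k))\<^sup>2)" by (rule sum_mono2) auto
    finally show ?thesis .
  qed
  then show "is_l2 (trunc N f)" by (rule l2_boundI)
qed

lemma l2_trunc_le: "is_l2 f \<Longrightarrow> l2_norm (trunc N f) \<le> l2_norm f"
  using partial_le_nsq[of f "{..<N}"] by (simp add: l2_norm_nsq l2_trunc)

lemma l2_tail: "is_l2 f \<Longrightarrow> (\<lambda>N. l2_norm (\<lambda>k. f k - trunc N f k)) \<longlonglongrightarrow> 0"
proof -
  assume f: "is_l2 f"
  have eq: "nsq (\<lambda>k. f k - trunc N f k) = nsq f - (\<Sum>k<N. (cmod (f k))\<^sup>2)" for N
  proof -
    have "(\<lambda>k. (cmod (f k - trunc N f k))\<^sup>2) = (\<lambda>k. (cmod (f k))\<^sup>2 - (cmod (trunc N f k))\<^sup>2)"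
      by (auto simp: trunc_def)
    then have "nsq (\<lambda>k. f k - trunc N f k) = nsq f - nsq (trunc N f)"
      using f l2_trunc(1)[of N f] unfolding nsq_def is_l2_def by (simp add: suminf_diff)
    then show ?thesis by (simp add: l2_trunc)
  qed
  have "(\<lambda>N. nsq f - (\<Sum>k<N. (cmod (f k))\<^sup>2)) \<longlonglongrightarrow> nsq f - nsq f"
    using f unfolding nsq_def is_l2_def by (intro tendsto_intros summable_LIMSEQ)
  then have "(\<lambda>N. sqrt (nsq (\<lambda>k. f k - trunc N f k))) \<longlonglongrightarrow> sqrt 0"
    unfolding eq by (intro tendsto_intros) simp
  then show ?thesis by (simp add: l2_norm_nsq)
qed

lemma bound_nonneg: "\<forall>x\<in>II. cmod (\<phi> x) \<le> M \<Longrightarrow> 0 \<le> M"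
proof -
  assume "\<forall>x\<in>II. cmod (\<phi> x) \<le> M"
  moreover have "(0::real) \<in> II" by (simp add: mem_II)
  ultimately have "cmod (\<phi> 0) \<le> M" by blast
  then show ?thesis using norm_ge_zero order.trans by blast
qed

lemma row_l2:
  assumes c: "cont \<phi>" and M: "\<forall>x\<in>II. cmod (\<phi> x) \<le> M"
  shows "is_l2 (\<lambda>k. fourier_coeff \<phi> (int j - int k))" "l2_norm (\<lambda>k. fourier_coeff \<phi> (int j - int k)) \<le> M"
proof -
  have M0: "0 \<le> M" by (rule bound_nonneg[OF M])
  have h: "sqrt (\<Sum>k<n. (cmod (fourier_coeff \<phi> (int j - int k)))\<^sup>2) \<le> M" for n
    using real_sqrt_le_mono[OF row_bound[OF c M, where K=n and j=j]] M0 by simp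
  show "is_l2 (\<lambda>k. fourier_coeff \<phi> (int j - int k))" by (rule l2_norm_boundI(1)[OF h])
  show "l2_norm (\<lambda>k. fourier_coeff \<phi> (int j - int k)) \<le> M" by (rule l2_norm_boundI(2)[OF h])
qed

lemma T_coord:
  assumes c: "cont \<phi>" and M: "\<forall>x\<in>II. cmod (\<phi> x) \<le> M" and f: "is_l2 f"
  shows "summable (\<lambda>k. fourier_coeff \<phi> (int j - int k) * f k)" "cmod (toeplitz \<phi> f j) \<le> M * l2_norm f"
proof -
  note r = row_l2[OF c M, of j]
  show "summable (\<lambda>k. fourier_coeff \<phi> (int j - int k) * f k)" by (rule cs(2)[OF r(1) f])
  have "cmod (toeplitz \<phi> f j) \<le> l2_norm (\<lambda>k. fourier_coeff \<phi> (int j - int k)) * l2_norm f"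
    unfolding toeplitz_def by (rule cs(3)[OF r(1) f])
  also have "\<dots> \<le> M * l2_norm f" by (intro mult_right_mono r(2) l2_norm_nonneg f)
  finally show "cmod (toeplitz \<phi> f j) \<le> M * l2_norm f" .
qed

lemma T_summable: "cont \<phi> \<Longrightarrow> is_l2 f \<Longrightarrow> summable (\<lambda>k. fourier_coeff \<phi> (int j - int k) * f k)"
  using cont_bounded T_coord(1) by metis

lemma T_trunc_lim: "cont \<phi> \<Longrightarrow> is_l2 f \<Longrightarrow> (\<lambda>N. toeplitz \<phi> (trunc N f) j) \<longlonglongrightarrow> toeplitz \<phi> f j"
  unfolding toeplitz_trunc by (unfold toeplitz_def, rule summable_LIMSEQ, rule T_summable)

lemma T_bound:
  assumes c: "cont \<phi>" and M: "\<forall>x\<in>II. cmod (\<phi> x) \<le> M" and f: "is_l2 f"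
  shows "is_l2 (toeplitz \<phi> f)" "l2_norm (toeplitz \<phi> f) \<le> M * l2_norm f"
proof -
  have M0: "0 \<le> M" by (rule bound_nonneg[OF M])
  have le: "(\<Sum>j<J. (cmod (toeplitz \<phi> f j))\<^sup>2) \<le> M\<^sup>2 * nsq f" for J
  proof -
    have lim: "(\<lambda>N. \<Sum>j<J. (cmod (toeplitz \<phi> (trunc N f) j))\<^sup>2) \<longlonglongrightarrow> (\<Sum>j<J. (cmod (toeplitz \<phi> f j))\<^sup>2)"
      by (intro tendsto_intros T_trunc_lim c f)
    have "(\<Sum>j<J. (cmod (toeplitz \<phi> (trunc N f) j))\<^sup>2) \<le> M\<^sup>2 * nsq f" for N
    proof -
      have "(\<Sum>j<J. (cmod (toeplitz \<phi> (trunc N f) j))\<^sup>2) \<le> M\<^sup>2 * (\<Sum>k<N. (cmod (f k))\<^sup>2)"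
        by (rule toeplitz_trunc_bound[OF c M])
      also have "\<dots> \<le> M\<^sup>2 * nsq f" by (intro mult_left_mono partial_le_nsq f) auto
      finally show ?thesis .
    qed
    then show ?thesis by (intro LIMSEQ_le_const2[OF lim]) auto
  qed
  show "is_l2 (toeplitz \<phi> f)" by (rule l2_boundI(1)[OF le])
  have "nsq (toeplitz \<phi> f) \<le> M\<^sup>2 * nsq f" by (rule l2_boundI(2)[OF le])
  then have "sqrt (nsq (toeplitz \<phi> f)) \<le> sqrt (M\<^sup>2 * nsq f)" by (rule real_sqrt_le_mono)
  then show "l2_norm (toeplitz \<phi> f) \<le> M * l2_norm f"
    using M0 by (simp add: l2_norm_nsq real_sqrt_mult)
qed

lemma T_l2: "cont \<phi> \<Longrightarrow> is_l2 f \<Longrightarrow> is_l2 (toeplitz \<phi> f)"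
  using cont_bounded T_bound(1) by metis

lemma T_diff: "cont \<phi> \<Longrightarrow> is_l2 f \<Longrightarrow> is_l2 g \<Longrightarrow>
   toeplitz \<phi> (\<lambda>k. f k - g k) = (\<lambda>j. toeplitz \<phi> f j - toeplitz \<phi> g j)"
  unfolding toeplitz_def right_diff_distrib
  by (intro ext suminf_diff[symmetric] T_summable)

lemma T_add: "cont \<phi> \<Longrightarrow> is_l2 f \<Longrightarrow> is_l2 g \<Longrightarrow>
   toeplitz \<phi> (\<lambda>k. f k + g k) = (\<lambda>j. toeplitz \<phi> f j + toeplitz \<phi> g j)"
  unfolding toeplitz_def distrib_left
  by (intro ext suminf_add[symmetric] T_summable)

lemma T_scale: "cont \<phi> \<Longrightarrow> is_l2 f \<Longrightarrow> toeplitz \<phi> (\<lambda>k. c * f k) = (\<lambda>j. c * toeplitz \<phi> f j)"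
proof -
  assume c: "cont \<phi>" and f: "is_l2 f"
  have "(\<lambda>k. fourier_coeff \<phi> (int j - int k) * (c * f k)) = (\<lambda>k. c * (fourier_coeff \<phi> (int j - int k) * f k))" for j
    by (simp add: algebra_simps)
  then show ?thesis unfolding toeplitz_def using suminf_mult[OF T_summable[OF c f]] by auto
qed

lemma T_zero: "toeplitz \<phi> (\<lambda>k. 0) = (\<lambda>j. 0)"
  unfolding toeplitz_def by simp

lemma fc_diff: "cont \<phi>1 \<Longrightarrow> cont \<phi>2 \<Longrightarrow>
  fourier_coeff (\<lambda>x. \<phi>1 x - \<phi>2 x) n = fourier_coeff \<phi>1 n - fourier_coeff \<phi>2 n"
  unfolding fc_IP by (intro IP_diff_left) (auto intro: continuous_intros)

lemma fc_scale: "fourier_coeff (\<lambda>x. c * \<phi> x) n = c * fourier_coeff \<phi> n"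
  unfolding fc_ex by (simp add: mult.assoc)

lemma fc_one: "fourier_coeff (\<lambda>x. 1) n = (if n = 0 then 1 else 0)"
proof -
  have "(\<lambda>x. 1 * cnj (ex (of_int n) x)) = ex (of_int (- n))" by (auto simp: cnj_ex)
  then show ?thesis unfolding fc_ex using integral_ex_int[of "-n"] by simp
qed

lemma T_symb_diff: "cont \<phi>1 \<Longrightarrow> cont \<phi>2 \<Longrightarrow> is_l2 f \<Longrightarrow>
  toeplitz (\<lambda>x. \<phi>1 x - \<phi>2 x) f = (\<lambda>j. toeplitz \<phi>1 f j - toeplitz \<phi>2 f j)"
  unfolding toeplitz_def fc_diff left_diff_distrib
  by (intro ext suminf_diff[symmetric] T_summable)

lemma T_symb_scale: "cont \<phi> \<Longrightarrow> is_l2 f \<Longrightarrow> toeplitz (\<lambda>x. c * \<phi> x) f = (\<lambda>j. c * toeplitz \<phi> f j)"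
  unfolding toeplitz_def fc_scale mult.assoc
  by (intro ext suminf_mult T_summable)

lemma T_one: "toeplitz (\<lambda>x. 1) f = f"
proof
  fix j
  show "toeplitz (\<lambda>x. 1) f j = f j"
    unfolding toeplitz_def fc_one by (subst suminf_finite[of "{j}"]) auto
qed

lemma l2_cnj: "is_l2 f \<Longrightarrow> is_l2 (\<lambda>j. cnj (f j))" "l2_norm (\<lambda>j. cnj (f j)) = l2_norm f"
  by (auto simp: is_l2_def l2_norm_def)

definition Qf :: "(real \<Rightarrow> complex) \<Rightarrow> (nat \<Rightarrow> complex) \<Rightarrow> complex" where
  "Qf \<phi> f = (\<Sum>j. toeplitz \<phi> f j * cnj (f j))"

lemma Q_trunc:
  assumes c: "cont \<phi>"
  shows "Qf \<phi> (trunc N f) = IP (\<lambda>x. \<phi> x * TP N f x) (TP N f)"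
proof -
  have "Qf \<phi> (trunc N f) = (\<Sum>j<N. cnj (f j) * IP (\<lambda>x. \<phi> x * TP N f x) (ex (real j)))"
    unfolding Qf_def
    by (subst suminf_finite[of "{..<N}"]) (auto simp: trunc_def toeplitz_trunc_IP[OF c, symmetric] mult.commute)
  also have "\<dots> = IP (\<lambda>x. \<phi> x * TP N f x) (\<lambda>x. \<Sum>j<N. f j * ex (real j) x)"
    using c by (intro IP_sum_right[symmetric]) (auto intro!: continuous_intros)
  also have "\<dots> = IP (\<lambda>x. \<phi> x * TP N f x) (TP N f)"
    by (simp add: TP_def[abs_def])
  finally show ?thesis .
qed

lemma Q_bound:
  assumes c: "cont \<phi>" and M: "\<forall>x\<in>II. cmod (\<phi> x) \<le> M" and f: "is_l2 f"
  shows "cmod (Qf \<phi> f) \<le> M * (l2_norm f)\<^sup>2"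
proof -
  have "cmod (Qf \<phi> f) \<le> l2_norm (toeplitz \<phi> f) * l2_norm (\<lambda>j. cnj (f j))"
    unfolding Qf_def by (rule cs(3)[OF T_bound(1)[OF c M f] l2_cnj(1)[OF f]])
  also have "\<dots> \<le> (M * l2_norm f) * l2_norm f"
    using T_bound(2)[OF c M f] l2_norm_nonneg[OF f] by (simp add: l2_cnj mult_right_mono)
  finally show ?thesis by (simp add: power2_eq_square mult.assoc)
qed

lemma Q_lim:
  assumes c: "cont \<phi>" and f: "is_l2 f"
  shows "(\<lambda>N. Qf \<phi> (trunc N f)) \<longlonglongrightarrow> Qf \<phi> f"
proof -
  obtain M where M: "\<forall>x\<in>II. cmod (\<phi> x) \<le> M" using cont_bounded[OF c] by blast
  have M0: "0 \<le> M" by (rule bound_nonneg[OF M])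
  define d where "d N = (\<lambda>k. f k - trunc N f k)" for N
  have d: "is_l2 (d N)" for N unfolding d_def by (intro l2_diff f l2_trunc)
  have tr: "is_l2 (trunc N f)" for N by (rule l2_trunc)
  have key: "cmod (Qf \<phi> (trunc N f) - Qf \<phi> f) \<le> 2 * M * l2_norm f * l2_norm (d N)" for N
  proof -
    let ?T = "toeplitz \<phi>"
    have e1: "Qf \<phi> f - Qf \<phi> (trunc N f) =
       (\<Sum>j. ?T (d N) j * cnj (f j)) + (\<Sum>j. ?T (trunc N f) j * cnj (d N j))"
    proof -
      have s1: "summable (\<lambda>j. ?T f j * cnj (f j))" by (rule cs(2)[OF T_l2[OF c f] l2_cnj(1)[OF f]])
      have s2: "summable (\<lambda>j. ?T (trunc N f) j * cnj (trunc N f j))"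
        by (rule cs(2)[OF T_l2[OF c tr] l2_cnj(1)[OF tr]])
      have s3: "summable (\<lambda>j. ?T (d N) j * cnj (f j))" by (rule cs(2)[OF T_l2[OF c d] l2_cnj(1)[OF f]])
      have s4: "summable (\<lambda>j. ?T (trunc N f) j * cnj (d N j))" by (rule cs(2)[OF T_l2[OF c tr] l2_cnj(1)[OF d]])
      have pw: "?T f j * cnj (f j) - ?T (trunc N f) j * cnj (trunc N f j) =
          ?T (d N) j * cnj (f j) + ?T (trunc N f) j * cnj (d N j)" for j
        unfolding d_def T_diff[OF c f tr] by (simp add: algebra_simps)
      have "Qf \<phi> f - Qf \<phi> (trunc N f) = (\<Sum>j. ?T f j * cnj (f j) - ?T (trunc N f) j * cnj (trunc N f j))"
        unfolding Qf_def by (rule suminf_diff[OF s1 s2])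
      also have "\<dots> = (\<Sum>j. ?T (d N) j * cnj (f j) + ?T (trunc N f) j * cnj (d N j))" unfolding pw ..
      also have "\<dots> = (\<Sum>j. ?T (d N) j * cnj (f j)) + (\<Sum>j. ?T (trunc N f) j * cnj (d N j))"
        by (rule suminf_add[OF s3 s4, symmetric])
      finally show ?thesis .
    qed
    have b1: "cmod (\<Sum>j. ?T (d N) j * cnj (f j)) \<le> M * l2_norm (d N) * l2_norm f"
    proof -
      have "cmod (\<Sum>j. ?T (d N) j * cnj (f j)) \<le> l2_norm (?T (d N)) * l2_norm (\<lambda>j. cnj (f j))"
        by (rule cs(3)[OF T_l2[OF c d] l2_cnj(1)[OF f]])
      also have "\<dots> \<le> M * l2_norm (d N) * l2_norm f"
        using T_bound(2)[OF c M d[of N]] l2_norm_nonneg[OF f] by (simp add: l2_cnj mult_right_mono)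
      finally show ?thesis .
    qed
    have b2: "cmod (\<Sum>j. ?T (trunc N f) j * cnj (d N j)) \<le> M * l2_norm f * l2_norm (d N)"
    proof -
      have "cmod (\<Sum>j. ?T (trunc N f) j * cnj (d N j)) \<le> l2_norm (?T (trunc N f)) * l2_norm (\<lambda>j. cnj (d N j))"
        by (rule cs(3)[OF T_l2[OF c tr] l2_cnj(1)[OF d]])
      also have "\<dots> \<le> (M * l2_norm (trunc N f)) * l2_norm (d N)"
        using T_bound(2)[OF c M tr[of N]] l2_norm_nonneg[OF d[of N]] by (simp add: l2_cnj mult_right_mono)
      also have "\<dots> \<le> M * l2_norm f * l2_norm (d N)"
        using l2_trunc_le[OF f, of N] M0 l2_norm_nonneg[OF d[of N]] by (intro mult_right_mono mult_left_mono) auto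
      finally show ?thesis .
    qed
    have "cmod (Qf \<phi> (trunc N f) - Qf \<phi> f) = cmod (Qf \<phi> f - Qf \<phi> (trunc N f))" by (rule norm_minus_commute)
    also have "\<dots> \<le> cmod (\<Sum>j. ?T (d N) j * cnj (f j)) + cmod (\<Sum>j. ?T (trunc N f) j * cnj (d N j))"
      unfolding e1 by (rule norm_triangle_ineq)
    also have "\<dots> \<le> 2 * M * l2_norm f * l2_norm (d N)" using b1 b2 by (simp add: algebra_simps)
    finally show ?thesis .
  qed
  have "(\<lambda>N. 2 * M * l2_norm f * l2_norm (d N)) \<longlonglongrightarrow> 2 * M * l2_norm f * 0"
    unfolding d_def by (intro tendsto_intros l2_tail f)
  then have lim0: "(\<lambda>N. 2 * M * l2_norm f * l2_norm (d N)) \<longlonglongrightarrow> 0" by simp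
  have "(\<lambda>N. Qf \<phi> (trunc N f) - Qf \<phi> f) \<longlonglongrightarrow> 0"
    by (rule Lim_null_comparison[OF always_eventually lim0]) (intro allI key)
  then show ?thesis by (rule LIM_zero_cancel)
qed

lemma ex_cis: "ex t x = cis (2 * pi * t * x)"
  unfolding ex_def cis_conv_exp by (simp add: algebra_simps)

lemma ex_bound: "\<forall>x\<in>II. cmod (ex t x) \<le> 1" by simp

lemma cos_lower:
  assumes "\<bar>y\<bar> \<le> b" "b \<le> pi"
  shows "cos b \<le> cos y"
proof -
  have "cos b \<le> cos \<bar>y\<bar>" using assms by (intro cos_monotone_0_pi_le) auto
  then show ?thesis by simp
qed

lemma symb_est:
  assumes eta: "\<bar>\<eta>\<bar> < 1/2" and x: "x \<in> II"
  shows "cmod (1 - of_real (cos (pi * \<eta>)) * ex \<eta> x) \<le> sqrt (1 - (cos (pi * \<eta>))\<^sup>2)"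
proof -
  define \<kappa> where "\<kappa> = cos (pi * \<eta>)"
  define \<theta> where "\<theta> = 2 * pi * \<eta> * x"
  have e1: "-1/2 < \<eta>" "\<eta> < 1/2" using eta by auto
  have "pi * (-1/2) < pi * \<eta>" "pi * \<eta> < pi * (1/2)"
    using mult_strict_left_mono[OF e1(1) pi_gt_zero] mult_strict_left_mono[OF e1(2) pi_gt_zero] by auto
  then have k0: "0 < \<kappa>" unfolding \<kappa>_def by (intro cos_gt_zero_pi) auto
  have "\<bar>\<theta>\<bar> \<le> pi * \<bar>\<eta>\<bar>"
  proof -
    have "\<bar>x\<bar> \<le> 1/2" using x by (auto simp: mem_II)
    then have "\<bar>\<eta>\<bar> * \<bar>x\<bar> \<le> \<bar>\<eta>\<bar> * (1/2)" by (intro mult_left_mono) auto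
    then show ?thesis unfolding \<theta>_def by (simp add: abs_mult)
  qed
  moreover have "pi * \<bar>\<eta>\<bar> \<le> pi" using eta by simp
  ultimately have "cos (pi * \<bar>\<eta>\<bar>) \<le> cos \<theta>" by (rule cos_lower)
  moreover have "cos (pi * \<bar>\<eta>\<bar>) = \<kappa>" unfolding \<kappa>_def
    by (cases "\<eta> \<ge> 0") (auto simp: abs_if)
  ultimately have ct: "\<kappa> \<le> cos \<theta>" by simp
  have "(cmod (1 - of_real \<kappa> * ex \<eta> x))\<^sup>2 = (1 - \<kappa> * cos \<theta>)\<^sup>2 + (\<kappa> * sin \<theta>)\<^sup>2"
    unfolding cmod_power2 ex_cis \<theta>_def by simp
  also have "\<dots> = 1 - 2 * \<kappa> * cos \<theta> + \<kappa>\<^sup>2 * ((sin \<theta>)\<^sup>2 + (cos \<theta>)\<^sup>2)"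
    by algebra
  also have "\<dots> = 1 - 2 * \<kappa> * cos \<theta> + \<kappa>\<^sup>2" by simp
  also have "\<dots> \<le> 1 - \<kappa>\<^sup>2"
  proof -
    have "\<kappa> * \<kappa> \<le> \<kappa> * cos \<theta>" using ct k0 by (intro mult_left_mono) auto
    then show ?thesis by (simp add: power2_eq_square)
  qed
  finally show ?thesis unfolding \<kappa>_def[symmetric] by (rule real_le_rsqrt)
qed

fun nseq :: "(real \<Rightarrow> complex) \<Rightarrow> complex \<Rightarrow> (nat \<Rightarrow> complex) \<Rightarrow> nat \<Rightarrow> nat \<Rightarrow> complex" where
  "nseq \<psi> k g 0 = (\<lambda>j. 0)"
| "nseq \<psi> k g (Suc n) = (\<lambda>j. toeplitz \<psi> (nseq \<psi> k g n) j + k * g j)"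

lemma l2_fatou:
  assumes conv: "\<And>j. (\<lambda>m. X m j) \<longlonglongrightarrow> x j"
    and bnd: "\<And>m. m \<ge> m0 \<Longrightarrow> is_l2 (X m) \<and> l2_norm (X m) \<le> B"
  shows "is_l2 x" "l2_norm x \<le> B"
proof -
  have le: "sqrt (\<Sum>j<J. (cmod (x j))\<^sup>2) \<le> B" for J
  proof -
    have lim: "(\<lambda>m. sqrt (\<Sum>j<J. (cmod (X m j))\<^sup>2)) \<longlonglongrightarrow> sqrt (\<Sum>j<J. (cmod (x j))\<^sup>2)"
      by (intro tendsto_intros conv)
    have "\<forall>m\<ge>m0. sqrt (\<Sum>j<J. (cmod (X m j))\<^sup>2) \<le> B"
    proof (intro allI impI)
      fix m assume "m0 \<le> m"
      then have "is_l2 (X m)" "l2_norm (X m) \<le> B" using bnd by auto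
      then show "sqrt (\<Sum>j<J. (cmod (X m j))\<^sup>2) \<le> B" using partial_sqrt_le[of "X m" J] by linarith
    qed
    then show ?thesis by (intro LIMSEQ_le_const2[OF lim]) auto
  qed
  show "is_l2 x" by (rule l2_norm_boundI(1)[OF le])
  show "l2_norm x \<le> B" by (rule l2_norm_boundI(2)[OF le])
qed

lemma neumann:
  fixes k :: complex
  assumes c: "cont \<psi>" and Mq: "\<forall>x\<in>II. cmod (\<psi> x) \<le> q" and q1: "q < 1" and g: "is_l2 g"
  defines "h \<equiv> \<lambda>j. lim (\<lambda>n. nseq \<psi> k g n j)"
  shows "is_l2 h" "l2_norm h \<le> cmod k * l2_norm g / (1 - q)"
    "\<And>j. h j = toeplitz \<psi> h j + k * g j"
proof -
  define hs where "hs = nseq \<psi> k g"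
  define C where "C = cmod k * l2_norm g"
  have q0: "0 \<le> q" by (rule bound_nonneg[OF Mq])
  have C0: "0 \<le> C" unfolding C_def using l2_norm_nonneg[OF g] by simp
  have kg: "is_l2 (\<lambda>j. k * g j)" "l2_norm (\<lambda>j. k * g j) = C" using l2_scale[OF g] by (auto simp: C_def)
  have hl2: "is_l2 (hs n)" for n
    by (induction n) (auto simp: hs_def l2_zero intro!: l2_add kg T_l2 c)
  define d where "d n = (\<lambda>j. hs (Suc n) j - hs n j)" for n
  have dl2: "is_l2 (d n)" for n unfolding d_def by (intro l2_diff hl2)
  have dS: "d (Suc n) = toeplitz \<psi> (d n)" for n
    unfolding d_def hs_def using T_diff[OF c hl2[unfolded hs_def] hl2[unfolded hs_def], of "Suc n" n]
    by (auto simp: fun_eq_iff)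
  have dbound: "l2_norm (d n) \<le> q ^ n * C" for n
  proof (induction n)
    case 0
    have "d 0 = (\<lambda>j. k * g j)" by (simp add: d_def hs_def T_zero)
    then show ?case using kg by simp
  next
    case (Suc n)
    have "l2_norm (d (Suc n)) \<le> q * l2_norm (d n)" unfolding dS by (rule T_bound(2)[OF c Mq dl2])
    also have "\<dots> \<le> q * (q ^ n * C)" using Suc q0 by (intro mult_left_mono) auto
    finally show ?case by simp
  qed
  have cauchy: "l2_norm (\<lambda>j. hs m j - hs n j) \<le> (q ^ n - q ^ m) / (1 - q) * C \<and> is_l2 (\<lambda>j. hs m j - hs n j)"
    if "n \<le> m" for n m
    using that
  proof (induction m)
    case 0
    then show ?case by (simp add: l2_zero)
  next
    case (Suc m)
    show ?case
    proof (cases "n = Suc m")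
      case True
      then show ?thesis by (simp add: l2_zero)
    next
      case False
      with Suc have IH: "l2_norm (\<lambda>j. hs m j - hs n j) \<le> (q ^ n - q ^ m) / (1 - q) * C"
        "is_l2 (\<lambda>j. hs m j - hs n j)" by auto
      have eq: "(\<lambda>j. hs (Suc m) j - hs n j) = (\<lambda>j. d m j + (hs m j - hs n j))"
        by (auto simp: d_def)
      have "l2_norm (\<lambda>j. d m j + (hs m j - hs n j)) \<le> l2_norm (d m) + l2_norm (\<lambda>j. hs m j - hs n j)"
        by (rule l2_add(2)[OF dl2 IH(2)])
      also have "\<dots> \<le> q ^ m * C + (q ^ n - q ^ m) / (1 - q) * C" using dbound[of m] IH(1) by simp
      also have "\<dots> = (q ^ n - q ^ Suc m) / (1 - q) * C" using q1 by (simp add: field_simps)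
      finally show ?thesis unfolding eq using l2_add(1)[OF dl2 IH(2)] by simp
    qed
  qed
  have cauchy2: "cmod (hs m j - hs n j) \<le> q ^ n / (1 - q) * C" if "n \<le> m" for n m j
  proof -
    have "cmod (hs m j - hs n j) \<le> l2_norm (\<lambda>j. hs m j - hs n j)"
      using coord_le[OF cauchy[OF that, THEN conjunct2]] by simp
    also have "\<dots> \<le> (q ^ n - q ^ m) / (1 - q) * C" using cauchy[OF that] by simp
    also have "\<dots> \<le> q ^ n / (1 - q) * C" using q0 q1 C0
      by (intro mult_right_mono divide_right_mono) auto
    finally show ?thesis .
  qed
  have qlim: "(\<lambda>n. q ^ n / (1 - q) * C) \<longlonglongrightarrow> 0"
    using q0 q1 by (intro tendsto_mult_left_zero tendsto_divide_zero LIMSEQ_power_zero) auto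
  have conv: "(\<lambda>n. hs n j) \<longlonglongrightarrow> h j" for j
  proof -
    have "Cauchy (\<lambda>n. hs n j)"
    proof (rule CauchyI)
      fix e :: real assume e: "0 < e"
      obtain M where M: "\<forall>n\<ge>M. q ^ n / (1 - q) * C < e"
        using qlim e by (metis (no_types, lifting) eventually_sequentially order_tendsto_iff)
      have "cmod (hs m j - hs n j) < e" if "m \<ge> M" "n \<ge> M" for m n
      proof (cases "n \<le> m")
        case True
        then show ?thesis using cauchy2[OF True, of j] M that by force
      next
        case False
        then have "cmod (hs n j - hs m j) < e" using cauchy2[of m n j] M that by force
        then show ?thesis by (simp add: norm_minus_commute)
      qed
      then show "\<exists>M. \<forall>m\<ge>M. \<forall>n\<ge>M. norm (hs m j - hs n j) < e" by blast
    qed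
    then show ?thesis unfolding h_def hs_def Cauchy_convergent_iff convergent_LIMSEQ_iff .
  qed
  have tail: "is_l2 (\<lambda>j. h j - hs n j) \<and> l2_norm (\<lambda>j. h j - hs n j) \<le> q ^ n / (1 - q) * C" for n
  proof -
    have "\<And>j. (\<lambda>m. hs m j - hs n j) \<longlonglongrightarrow> h j - hs n j" by (intro tendsto_intros conv)
    moreover have "is_l2 (\<lambda>j. hs m j - hs n j) \<and> l2_norm (\<lambda>j. hs m j - hs n j) \<le> q ^ n / (1 - q) * C"
      if "m \<ge> n" for m
    proof -
      have "(q ^ n - q ^ m) / (1 - q) * C \<le> q ^ n / (1 - q) * C" using q0 q1 C0
        by (intro mult_right_mono divide_right_mono) auto
      then show ?thesis using cauchy[OF that] by auto
    qed
    ultimately show ?thesis using l2_fatou[of "\<lambda>m j. hs m j - hs n j" "\<lambda>j. h j - hs n j" n] by blast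
  qed
  have hs0: "hs 0 = (\<lambda>j. 0)" by (simp add: hs_def)
  show hl: "is_l2 h" using tail[of 0] by (simp add: hs0)
  show "l2_norm h \<le> cmod k * l2_norm g / (1 - q)" using tail[of 0] by (simp add: hs0 C_def)
  fix j
  have lim1: "(\<lambda>n. toeplitz \<psi> (hs n) j) \<longlonglongrightarrow> toeplitz \<psi> h j"
  proof -
    have key: "cmod (toeplitz \<psi> (hs n) j - toeplitz \<psi> h j) \<le> q * (q ^ n / (1 - q) * C)" for n
    proof -
      have "toeplitz \<psi> (hs n) j - toeplitz \<psi> h j = - toeplitz \<psi> (\<lambda>j. h j - hs n j) j"
        using T_diff[OF c hl hl2] by (simp add: fun_eq_iff)
      then have "cmod (toeplitz \<psi> (hs n) j - toeplitz \<psi> h j) = cmod (toeplitz \<psi> (\<lambda>j. h j - hs n j) j)"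
        by simp
      also have "\<dots> \<le> q * l2_norm (\<lambda>j. h j - hs n j)" using tail[of n] by (intro T_coord(2)[OF c Mq]) auto
      also have "\<dots> \<le> q * (q ^ n / (1 - q) * C)" using tail[of n] q0 by (intro mult_left_mono) auto
      finally show ?thesis .
    qed
    have lim0: "(\<lambda>n. q * (q ^ n / (1 - q) * C)) \<longlonglongrightarrow> 0"
      by (rule tendsto_mult_right_zero[OF qlim])
    have "(\<lambda>n. toeplitz \<psi> (hs n) j - toeplitz \<psi> h j) \<longlonglongrightarrow> 0"
      by (rule Lim_null_comparison[OF always_eventually lim0]) (intro allI key)
    then show ?thesis by (rule LIM_zero_cancel)
  qed
  have "(\<lambda>n. hs (Suc n) j) \<longlonglongrightarrow> toeplitz \<psi> h j + k * g j"
    unfolding hs_def nseq.simps using lim1[unfolded hs_def] by (intro tendsto_intros)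
  moreover have "(\<lambda>n. hs (Suc n) j) \<longlonglongrightarrow> h j" using conv[of j] by (rule LIMSEQ_Suc)
  ultimately show "h j = toeplitz \<psi> h j + k * g j" using LIMSEQ_unique by blast
qed

lemma cos_pos_eta: "\<bar>\<eta>\<bar> < 1/2 \<Longrightarrow> 0 < cos (pi * \<eta>)"
proof -
  assume eta: "\<bar>\<eta>\<bar> < 1/2"
  have e1: "-1/2 < \<eta>" "\<eta> < 1/2" using eta by auto
  have "pi * (-1/2) < pi * \<eta>" "pi * \<eta> < pi * (1/2)"
    using mult_strict_left_mono[OF e1(1) pi_gt_zero] mult_strict_left_mono[OF e1(2) pi_gt_zero] by auto
  then show ?thesis by (intro cos_gt_zero_pi) auto
qed

lemma A_eq:
  assumes u: "is_l2 u"
  shows "toeplitz (\<lambda>x. 1 - of_real \<kappa> * ex \<eta> x) u = (\<lambda>j. u j - of_real \<kappa> * toeplitz (ex \<eta>) u j)"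
proof -
  have "toeplitz (\<lambda>x. 1 - of_real \<kappa> * ex \<eta> x) u =
      (\<lambda>j. toeplitz (\<lambda>x. 1) u j - toeplitz (\<lambda>x. of_real \<kappa> * ex \<eta> x) u j)"
    using u by (intro T_symb_diff) (auto intro!: continuous_intros)
  also have "\<dots> = (\<lambda>j. u j - of_real \<kappa> * toeplitz (ex \<eta>) u j)"
    using u by (simp add: T_one T_symb_scale[where \<phi>="ex \<eta>"] continuous_intros)
  finally show ?thesis .
qed

lemma inv_pkg:
  assumes eta: "\<bar>\<eta>\<bar> < 1/2"
  shows "\<exists>c>0. \<forall>u. is_l2 u \<longrightarrow> c * l2_norm u \<le> l2_norm (toeplitz (ex \<eta>) u)"
    "\<forall>g. is_l2 g \<longrightarrow> (\<exists>f. is_l2 f \<and> toeplitz (ex \<eta>) f = g)"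
    "toeplitz_invertible (ex \<eta>)"
proof -
  define \<kappa> where "\<kappa> = cos (pi * \<eta>)"
  define q where "q = sqrt (1 - \<kappa>\<^sup>2)"
  define \<psi> where "\<psi> x = 1 - of_real \<kappa> * ex \<eta> x" for x
  define T where "T = toeplitz (ex \<eta>)"
  have k0: "0 < \<kappa>" unfolding \<kappa>_def by (rule cos_pos_eta[OF eta])
  have k1: "\<kappa> \<le> 1" unfolding \<kappa>_def by simp
  have q0: "0 \<le> q" unfolding q_def using k1 k0 by (simp add: power_le_one)
  have "1 - \<kappa>\<^sup>2 < 1" using k0 by simp
  then have q1: "q < 1" unfolding q_def using real_sqrt_less_mono by fastforce
  have cpsi: "cont \<psi>" unfolding \<psi>_def[abs_def] by (intro continuous_intros)
  have Mq: "\<forall>x\<in>II. cmod (\<psi> x) \<le> q" unfolding \<psi>_def q_def \<kappa>_def using symb_est[OF eta] by blast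
  have cT: "cont (ex \<eta>)" by (intro continuous_intros)
  have Aeq: "toeplitz \<psi> u = (\<lambda>j. u j - of_real \<kappa> * T u j)" if "is_l2 u" for u
    unfolding \<psi>_def[abs_def] T_def by (rule A_eq[OF that])
  have BB: "(1 - q) / \<kappa> * l2_norm u \<le> l2_norm (T u)" if u: "is_l2 u" for u
  proof -
    have Tu: "is_l2 (T u)" unfolding T_def by (rule T_l2[OF cT u])
    have eq: "u = (\<lambda>j. toeplitz \<psi> u j + of_real \<kappa> * T u j)" using Aeq[OF u] by (auto simp: fun_eq_iff)
    have "l2_norm u \<le> l2_norm (toeplitz \<psi> u) + l2_norm (\<lambda>j. of_real \<kappa> * T u j)"
      by (subst (1) eq) (rule l2_add(2)[OF T_l2[OF cpsi u] l2_scale(1)[OF Tu]])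
    also have "\<dots> \<le> q * l2_norm u + \<kappa> * l2_norm (T u)"
      using T_bound(2)[OF cpsi Mq u] l2_scale(3)[OF Tu, of "of_real \<kappa>"] k0 by simp
    finally have "l2_norm u \<le> q * l2_norm u + \<kappa> * l2_norm (T u)" .
    then have "(1 - q) * l2_norm u \<le> \<kappa> * l2_norm (T u)" by (simp add: algebra_simps)
    then show ?thesis using k0 by (simp add: field_simps)
  qed
  have cpos: "0 < (1 - q) / \<kappa>" using q1 k0 by simp
  show "\<exists>c>0. \<forall>u. is_l2 u \<longrightarrow> c * l2_norm u \<le> l2_norm (toeplitz (ex \<eta>) u)"
    using BB cpos unfolding T_def by blast
  have inj: "f = g" if "is_l2 f" "is_l2 g" "T f = T g" for f g
  proof -
    have d: "is_l2 (\<lambda>k. f k - g k)" by (rule l2_diff(1)[OF that(1,2)])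
    have z: "T (\<lambda>k. f k - g k) = (\<lambda>j. 0)" using T_diff[OF cT that(1,2)] that(3) unfolding T_def by simp
    have "(1 - q) / \<kappa> * l2_norm (\<lambda>k. f k - g k) \<le> l2_norm (T (\<lambda>k. f k - g k))" by (rule BB[OF d])
    also have "\<dots> = 0" unfolding z by (rule l2_zero(3))
    finally have c: "(1 - q) / \<kappa> * l2_norm (\<lambda>k. f k - g k) \<le> 0" .
    moreover have "0 \<le> l2_norm (\<lambda>k. f k - g k)" by (rule l2_norm_nonneg[OF d])
    ultimately have "l2_norm (\<lambda>k. f k - g k) = 0"
      using mult_pos_pos[OF cpos, of "l2_norm (\<lambda>k. f k - g k)"] by linarith
    then have "(\<lambda>k. f k - g k) = (\<lambda>_. 0)" by (rule l2_eq_0[OF d])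
    then show ?thesis by (auto simp: fun_eq_iff dest: fun_cong)
  qed
  define S where "S g = (\<lambda>j. lim (\<lambda>n. nseq \<psi> (of_real \<kappa>) g n j))" for g
  have Sp: "is_l2 (S g) \<and> T (S g) = g \<and> l2_norm (S g) \<le> \<kappa> / (1 - q) * l2_norm g" if g: "is_l2 g" for g
  proof -
    note N = neumann[OF cpsi Mq q1 g, where k="of_real \<kappa>"]
    have h: "is_l2 (S g)" using N(1) unfolding S_def .
    have "S g j = toeplitz \<psi> (S g) j + of_real \<kappa> * g j" for j using N(3)[of j] unfolding S_def .
    then have "S g j = S g j - of_real \<kappa> * T (S g) j + of_real \<kappa> * g j" for j using Aeq[OF h] by simp
    then have "of_real \<kappa> * T (S g) j = of_real \<kappa> * g j" for j by (simp add: algebra_simps)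
    then have "T (S g) = g" using k0 by (auto simp: fun_eq_iff)
    moreover have "l2_norm (S g) \<le> \<kappa> / (1 - q) * l2_norm g" using N(2) k0 unfolding S_def by simp
    ultimately show ?thesis using h by blast
  qed
  show "\<forall>g. is_l2 g \<longrightarrow> (\<exists>f. is_l2 f \<and> toeplitz (ex \<eta>) f = g)" using Sp unfolding T_def by blast
  have 1: "\<forall>g. is_l2 g \<longrightarrow> is_l2 (S g) \<and> toeplitz (ex \<eta>) (S g) = g" using Sp unfolding T_def by blast
  have 2: "\<forall>f. is_l2 f \<longrightarrow> S (toeplitz (ex \<eta>) f) = f"
  proof (intro allI impI)
    fix f assume f: "is_l2 f"
    have Tf: "is_l2 (T f)" unfolding T_def by (rule T_l2[OF cT f])
    have "T (S (T f)) = T f" using Sp[OF Tf] by blast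
    then have "S (T f) = f" using inj[OF Sp[OF Tf, THEN conjunct1] f] by blast
    then show "S (toeplitz (ex \<eta>) f) = f" unfolding T_def .
  qed
  have 3: "\<exists>C. \<forall>g. is_l2 g \<longrightarrow> l2_norm (S g) \<le> C * l2_norm g" using Sp by blast
  show "toeplitz_invertible (ex \<eta>)" unfolding toeplitz_invertible_def using 1 2 3 by blast
qed

lemma fc_ex_int_shift: "fourier_coeff (ex (\<xi> + of_int d)) m = fourier_coeff (ex \<xi>) (m - d)"
proof -
  have "ex (\<xi> + of_int d) x * cnj (ex (of_int m) x) = ex \<xi> x * cnj (ex (of_int (m - d)) x)" for x
  proof -
    have "ex (\<xi> + of_int d) x * cnj (ex (of_int m) x) = ex (\<xi> + of_int d + - of_int m) x"
      by (simp only: cnj_ex ex_add)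
    also have "\<dots> = ex (\<xi> + - of_int (m - d)) x"
      by (rule arg_cong[where f="\<lambda>t. ex t x"]) (simp add: algebra_simps)
    also have "\<dots> = ex \<xi> x * cnj (ex (of_int (m - d)) x)"
      by (simp only: cnj_ex ex_add)
    finally show ?thesis .
  qed
  then show ?thesis unfolding fc_ex by simp
qed

definition shiftR :: "nat \<Rightarrow> (nat \<Rightarrow> complex) \<Rightarrow> nat \<Rightarrow> complex" where
  "shiftR n w k = (if k < n then 0 else w (k - n))"

lemma l2_shiftR:
  assumes w: "is_l2 w"
  shows "is_l2 (shiftR n w)" "l2_norm (shiftR n w) = l2_norm w"
proof -
  have e: "(\<lambda>k. (cmod (shiftR n w (k + n)))\<^sup>2) = (\<lambda>k. (cmod (w k))\<^sup>2)" by (simp add: shiftR_def)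
  have s: "summable (\<lambda>k. (cmod (shiftR n w k))\<^sup>2)"
    using w unfolding is_l2_def by (subst summable_iff_shift[symmetric, of _ n]) (simp add: e)
  then show "is_l2 (shiftR n w)" unfolding is_l2_def .
  have "nsq (shiftR n w) = (\<Sum>k. (cmod (shiftR n w (k + n)))\<^sup>2) + (\<Sum>k<n. (cmod (shiftR n w k))\<^sup>2)"
    unfolding nsq_def by (rule suminf_split_initial_segment[OF s])
  also have "\<dots> = nsq w" by (simp add: e nsq_def shiftR_def)
  finally show "l2_norm (shiftR n w) = l2_norm w" by (simp add: l2_norm_nsq)
qed

lemma T_shift:
  assumes w: "is_l2 w"
  shows "toeplitz (ex (\<xi> + real n)) w = toeplitz (ex \<xi>) (shiftR n w)"
proof
  fix j
  define a where "a k = fourier_coeff (ex \<xi>) (int j - int k) * shiftR n w k" for k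
  have s: "summable a" unfolding a_def
    by (rule T_summable[OF _ l2_shiftR(1)[OF w]]) (intro continuous_intros)
  have "toeplitz (ex \<xi>) (shiftR n w) j = (\<Sum>k. a (k + n)) + (\<Sum>k<n. a k)"
    unfolding toeplitz_def a_def[symmetric] by (rule suminf_split_initial_segment[OF s])
  also have "\<dots> = (\<Sum>k. fourier_coeff (ex \<xi>) (int j - int k - int n) * w k)"
    by (simp add: a_def shiftR_def algebra_simps)
  also have "\<dots> = toeplitz (ex (\<xi> + real n)) w j"
    unfolding toeplitz_def using fc_ex_int_shift[of \<xi> "int n"] by simp
  finally show "toeplitz (ex (\<xi> + real n)) w j = toeplitz (ex \<xi>) (shiftR n w) j" ..
qed

lemma T_downshift: "toeplitz (ex (\<xi> - real p)) u j = toeplitz (ex \<xi>) u (j + p)"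
proof -
  have "fourier_coeff (ex (\<xi> - real p)) (int j - int k) = fourier_coeff (ex \<xi>) (int (j + p) - int k)" for k
    using fc_ex_int_shift[of \<xi> "- int p" "int j - int k"] by (simp add: algebra_simps)
  then show ?thesis unfolding toeplitz_def by simp
qed

lemma cis_minus_1: "cmod (cis t - 1) \<le> \<bar>t\<bar>"
proof -
  have "(cmod (cis t - 1))\<^sup>2 = (cos t - 1)\<^sup>2 + (sin t)\<^sup>2" by (simp add: cmod_power2)
  also have "\<dots> = 2 - 2 * cos t" by (simp add: power2_eq_square algebra_simps)
  also have "\<dots> = 4 * (sin (t/2))\<^sup>2" using cos_double_sin[of "t/2"] by simp
  also have "\<dots> \<le> 4 * (t/2)\<^sup>2"
  proof -
    have "\<bar>sin (t/2)\<bar> \<le> \<bar>t/2\<bar>" by (rule abs_sin_x_le_abs_x)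
    then have "(sin (t/2))\<^sup>2 \<le> (t/2)\<^sup>2" by (metis abs_le_square_iff)
    then show ?thesis by simp
  qed
  also have "\<dots> = t\<^sup>2" by (simp add: power2_eq_square)
  finally have "(cmod (cis t - 1))\<^sup>2 \<le> \<bar>t\<bar>\<^sup>2" by simp
  then show ?thesis by (rule power2_le_imp_le) simp
qed

lemma ex_diff_bound:
  assumes x: "x \<in> II"
  shows "cmod (ex a x - ex b x) \<le> pi * \<bar>a - b\<bar>"
proof -
  have "ex a x - ex b x = ex b x * (ex (a - b) x - 1)"
    by (simp add: right_diff_distrib ex_add)
  then have "cmod (ex a x - ex b x) = cmod (cis (2 * pi * (a - b) * x) - 1)"
    by (simp add: norm_mult ex_cis)
  also have "\<dots> \<le> \<bar>2 * pi * (a - b) * x\<bar>" by (rule cis_minus_1)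
  also have "\<dots> = 2 * pi * \<bar>a - b\<bar> * \<bar>x\<bar>" by (simp add: abs_mult)
  also have "\<dots> \<le> 2 * pi * \<bar>a - b\<bar> * (1/2)"
    using x by (intro mult_left_mono) (auto simp: mem_II)
  finally show ?thesis by simp
qed

lemma amgm: "0 < \<mu> \<Longrightarrow> (w::real) \<le> \<mu> * w\<^sup>2 / 2 + 1 / (2 * \<mu>)"
proof -
  assume m: "0 < \<mu>"
  have "0 \<le> (\<mu> * w - 1)\<^sup>2" by simp
  then have "2 * \<mu> * w \<le> (\<mu> * w)\<^sup>2 + 1" by (simp add: power2_eq_square algebra_simps)
  then have "2 * \<mu> * w / (2 * \<mu>) \<le> ((\<mu> * w)\<^sup>2 + 1) / (2 * \<mu>)" using m by (intro divide_right_mono) auto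
  also have "((\<mu> * w)\<^sup>2 + 1) / (2 * \<mu>) = \<mu> * w\<^sup>2 / 2 + 1 / (2 * \<mu>)" using m
    by (simp add: field_simps power2_eq_square)
  finally show ?thesis using m by simp
qed

lemma integral_const_interval: "a \<le> b \<Longrightarrow> integral {a..b} (\<lambda>x. c) = (b - a) * (c::real)"
  using integral_unique[OF has_integral_const_real[where a=a and b=b and c=c]] by simp

lemma lin5: "(i::real) = l + mm + r \<Longrightarrow> l \<le> A + p \<Longrightarrow> r \<le> A + q \<Longrightarrow> mm \<le> B \<Longrightarrow> p + q = t \<Longrightarrow> A + A = C \<Longrightarrow> i \<le> B + C + t"
  by linarith

lemma split_est:
  fixes w :: "real \<Rightarrow> real"
  assumes cw: "continuous_on II w" and w0: "\<And>x. 0 \<le> w x"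
    and a: "0 < a" "a < 1/2" and l: "0 < lam" and m: "0 < \<mu>"
  shows "integral II w \<le> lam / (2 * cos (pi * a)) * integral II (\<lambda>x. cos (pi * x) * (w x)\<^sup>2)
      + 1 / (2 * lam) + \<mu> * integral II (\<lambda>x. (w x)\<^sup>2) + (1/2 - a) / \<mu>"
proof -
  define s where "s = cos (pi * a)"
  have "pi * a < pi * (1/2)" using a by (intro mult_strict_left_mono) auto
  moreover have "0 < pi * a" using a by simp
  then have "-(pi/2) < pi * a" using pi_gt_zero by linarith
  ultimately have s0: "0 < s" unfolding s_def by (intro cos_gt_zero_pi) auto
  have cw': "continuous_on S w" if "S \<subseteq> II" for S using continuous_on_subset[OF cw that] .
  have sub: "{-1/2..-a} \<subseteq> II" "{-a..a} \<subseteq> II" "{a..1/2} \<subseteq> II" "{-a..1/2} \<subseteq> II"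
    using a by (auto simp: II_def)
  have iw: "w integrable_on {c..d}" if "{c..d} \<subseteq> II" for c d
    by (rule integrable_continuous_interval[OF cw'[OF that]])
  have iw2: "(\<lambda>x. (w x)\<^sup>2) integrable_on {c..d}" if "{c..d} \<subseteq> II" for c d
    by (rule integrable_continuous_interval) (intro continuous_intros cw'[OF that])
  have iwc: "(\<lambda>x. cos (pi * x) * (w x)\<^sup>2) integrable_on {c..d}" if "{c..d} \<subseteq> II" for c d
    by (rule integrable_continuous_interval) (intro continuous_intros cw'[OF that])
  have IIe: "II = {-1/2..1/2}" by (rule II_def)
  have split: "integral II w = integral {-1/2..-a} w + integral {-a..a} w + integral {a..1/2} w"
  proof -
    have iwII: "w integrable_on {-1/2..1/2}" by (rule iw) (simp add: II_def)
    have "integral {-1/2..-a} w + integral {-a..1/2} w = integral {-1/2..1/2} w"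
      by (rule Henstock_Kurzweil_Integration.integral_combine[OF _ _ iwII]) (use a in linarith)+
    moreover have "integral {-a..a} w + integral {a..1/2} w = integral {-a..1/2} w"
      by (rule Henstock_Kurzweil_Integration.integral_combine[OF _ _ iw[OF sub(4)]]) (use a in linarith)+
    ultimately show ?thesis unfolding IIe by linarith
  qed
  have iw2II: "(\<lambda>x. (w x)\<^sup>2) integrable_on II" unfolding IIe by (rule iw2) (simp add: II_def)
  have iwcII: "(\<lambda>x. cos (pi * x) * (w x)\<^sup>2) integrable_on II" unfolding IIe by (rule iwc) (simp add: II_def)
  have W2: "integral {c..d} (\<lambda>x. (w x)\<^sup>2) \<le> integral II (\<lambda>x. (w x)\<^sup>2)" if cd: "{c..d} \<subseteq> II" for c d
  proof (rule integral_subset_le)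
    show "{c..d} \<subseteq> II" by (rule cd)
    show "(\<lambda>x. (w x)\<^sup>2) integrable_on {c..d}" by (rule iw2[OF cd])
    show "(\<lambda>x. (w x)\<^sup>2) integrable_on II" by (rule iw2II)
  qed simp
  have side: "integral {c..d} w \<le> \<mu> / 2 * integral II (\<lambda>x. (w x)\<^sup>2) + (d - c) / (2 * \<mu>)"
    if cd: "{c..d} \<subseteq> II" "c \<le> d" for c d
  proof -
    have i1: "(\<lambda>x. \<mu> / 2 * (w x)\<^sup>2) integrable_on {c..d}" using iw2[OF cd(1)] by (rule integrable_on_mult_right)
    have i2: "(\<lambda>x. 1 / (2 * \<mu>)) integrable_on {c..d}" by (rule integrable_const_ivl)
    have "integral {c..d} w \<le> integral {c..d} (\<lambda>x. \<mu> / 2 * (w x)\<^sup>2 + 1 / (2 * \<mu>))"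
    proof (rule integral_le)
      show "w integrable_on {c..d}" by (rule iw[OF cd(1)])
      show "(\<lambda>x. \<mu> / 2 * (w x)\<^sup>2 + 1 / (2 * \<mu>)) integrable_on {c..d}" by (rule integrable_add[OF i1 i2])
      fix x show "w x \<le> \<mu> / 2 * (w x)\<^sup>2 + 1 / (2 * \<mu>)" using amgm[OF m, of "w x"] by simp
    qed
    also have "\<dots> = \<mu> / 2 * integral {c..d} (\<lambda>x. (w x)\<^sup>2) + (d - c) * (1 / (2 * \<mu>))"
      unfolding integral_add[OF i1 i2] integral_const_interval[OF cd(2)]
        integral_mult[OF iw2[OF cd(1)], symmetric] ..
    also have "\<dots> \<le> \<mu> / 2 * integral II (\<lambda>x. (w x)\<^sup>2) + (d - c) / (2 * \<mu>)"
    proof -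
      have "\<mu> / 2 * integral {c..d} (\<lambda>x. (w x)\<^sup>2) \<le> \<mu> / 2 * integral II (\<lambda>x. (w x)\<^sup>2)"
        using W2[OF cd(1)] m by (intro mult_left_mono) auto
      moreover have "(d - c) * (1 / (2 * \<mu>)) = (d - c) / (2 * \<mu>)" by simp
      ultimately show ?thesis by linarith
    qed
    finally show ?thesis .
  qed
  have mid: "integral {-a..a} w \<le> lam / (2 * s) * integral II (\<lambda>x. cos (pi * x) * (w x)\<^sup>2) + 1 / (2 * lam)"
  proof -
    have pw: "w x \<le> lam / (2 * s) * (cos (pi * x) * (w x)\<^sup>2) + 1 / (2 * lam)" if x: "x \<in> {-a..a}" for x
    proof -
      have "\<bar>x\<bar> \<le> a" using x by auto
      then have "pi * \<bar>x\<bar> \<le> pi * a" by (rule mult_left_mono) simp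
      then have px: "\<bar>pi * x\<bar> \<le> pi * a" by (simp add: abs_mult)
      have "pi * a \<le> pi * 1" using a by (intro mult_left_mono) auto
      then have cs: "s \<le> cos (pi * x)" unfolding s_def using px by (intro cos_lower) auto
      have "lam * (w x)\<^sup>2 / 2 = lam / (2 * s) * (s * (w x)\<^sup>2)" using s0 by (simp add: field_simps)
      also have "\<dots> \<le> lam / (2 * s) * (cos (pi * x) * (w x)\<^sup>2)"
        by (rule mult_left_mono[OF mult_right_mono[OF cs]]) (use s0 l in auto)
      finally show ?thesis using amgm[OF l, of "w x"] by linarith
    qed
    have i1: "(\<lambda>x. lam / (2 * s) * (cos (pi * x) * (w x)\<^sup>2)) integrable_on {-a..a}"
      using iwc[OF sub(2)] by (rule integrable_on_mult_right)
    have i2: "(\<lambda>x. 1 / (2 * lam)) integrable_on {-a..a}" by (rule integrable_const_ivl)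
    have "integral {-a..a} w \<le> integral {-a..a} (\<lambda>x. lam / (2 * s) * (cos (pi * x) * (w x)\<^sup>2) + 1 / (2 * lam))"
      using pw by (intro integral_le iw[OF sub(2)] integrable_add[OF i1 i2])
    also have "\<dots> = lam / (2 * s) * integral {-a..a} (\<lambda>x. cos (pi * x) * (w x)\<^sup>2) + (a - - a) * (1 / (2 * lam))"
    proof -
      have "-a \<le> a" using a by simp
      show ?thesis unfolding integral_add[OF i1 i2] integral_const_interval[OF \<open>-a \<le> a\<close>]
        integral_mult[OF iwc[OF sub(2)], symmetric] by (rule refl)
    qed
    also have "\<dots> \<le> lam / (2 * s) * integral II (\<lambda>x. cos (pi * x) * (w x)\<^sup>2) + 1 / (2 * lam)"
    proof -
      have "integral {-a..a} (\<lambda>x. cos (pi * x) * (w x)\<^sup>2) \<le> integral II (\<lambda>x. cos (pi * x) * (w x)\<^sup>2)"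
      proof (rule integral_subset_le)
        show "{-a..a} \<subseteq> II" using sub by auto
        show "(\<lambda>x. cos (pi * x) * (w x)\<^sup>2) integrable_on {-a..a}" by (rule iwc[OF sub(2)])
        show "(\<lambda>x. cos (pi * x) * (w x)\<^sup>2) integrable_on II" by (rule iwcII)
        show "\<forall>x\<in>II. 0 \<le> cos (pi * x) * (w x)\<^sup>2"
        proof
          fix x assume "x \<in> II"
          then have x: "-1/2 \<le> x" "x \<le> 1/2" by (auto simp: mem_II)
          have "pi * (-1/2) \<le> pi * x" "pi * x \<le> pi * (1/2)"
            using mult_left_mono[OF x(1), of pi] mult_left_mono[OF x(2), of pi] by auto
          then have "-(pi/2) \<le> pi * x" "pi * x \<le> pi/2" by auto
          then have "0 \<le> cos (pi * x)" by (rule cos_ge_zero)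
          then show "0 \<le> cos (pi * x) * (w x)\<^sup>2" by simp
        qed
      qed
      moreover have "0 \<le> lam / (2 * s)" using l s0 by simp
      ultimately have A: "lam / (2 * s) * integral {-a..a} (\<lambda>x. cos (pi * x) * (w x)\<^sup>2)
          \<le> lam / (2 * s) * integral II (\<lambda>x. cos (pi * x) * (w x)\<^sup>2)" by (rule mult_left_mono)
      have "(a - - a) * (1 / (2 * lam)) \<le> 1 * (1 / (2 * lam))"
        using a l by (intro mult_right_mono) auto
      with A show ?thesis by linarith
    qed
    finally show ?thesis .
  qed
  define X where "X = integral II (\<lambda>x. (w x)\<^sup>2)"
  define Y where "Y = integral II (\<lambda>x. cos (pi * x) * (w x)\<^sup>2)"
  have c1: "-1/2 \<le> -a" "a \<le> 1/2" using a by auto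
  have L: "integral {-1/2..-a} w \<le> \<mu> / 2 * X + (-a - -1/2) / (2 * \<mu>)"
    unfolding X_def by (rule side[OF sub(1) c1(1)])
  have R: "integral {a..1/2} w \<le> \<mu> / 2 * X + (1/2 - a) / (2 * \<mu>)"
    unfolding X_def by (rule side[OF sub(3) c1(2)])
  have Mi: "integral {-a..a} w \<le> lam / (2 * s) * Y + 1 / (2 * lam)" unfolding Y_def by (rule mid)
  have e1: "(-a - -1/2) / (2 * \<mu>) + (1/2 - a) / (2 * \<mu>) = (1/2 - a) / \<mu>"
    using m by (simp add: field_simps)
  have e2: "\<mu> / 2 * X + \<mu> / 2 * X = \<mu> * X" by simp
  have "integral II w \<le> lam / (2 * s) * Y + 1 / (2 * lam) + \<mu> * X + (1/2 - a) / \<mu>"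
    by (rule lin5[OF split L R Mi e1 e2])
  then show ?thesis unfolding s_def X_def Y_def .
qed

lemma Re_Q_trunc: "Re (Qf (ex (-1/2)) (trunc N u)) = integral II (\<lambda>x. cos (pi * x) * (cmod (TP N u x))\<^sup>2)"
proof -
  have c: "cont (ex (-1/2))" by (intro continuous_intros)
  have eq: "(\<lambda>x. ex (-1/2) x * TP N u x * cnj (TP N u x)) = (\<lambda>x. ex (-1/2) x * of_real ((cmod (TP N u x))\<^sup>2))"
    by (rule ext) (simp only: mult.assoc complex_norm_square)
  have i: "(\<lambda>x. ex (-1/2) x * of_real ((cmod (TP N u x))\<^sup>2)) integrable_on II"
    by (intro integrable_II continuous_intros)
  have "Qf (ex (-1/2)) (trunc N u) = integral II (\<lambda>x. ex (-1/2) x * of_real ((cmod (TP N u x))\<^sup>2))"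
    unfolding Q_trunc[OF c] IP_def eq ..
  then have "Re (Qf (ex (-1/2)) (trunc N u)) = Re (integral II (\<lambda>x. ex (-1/2) x * of_real ((cmod (TP N u x))\<^sup>2)))"
    by simp
  also have "\<dots> = integral II (\<lambda>x. Re (ex (-1/2) x * of_real ((cmod (TP N u x))\<^sup>2)))"
    using integral_linear[OF i bounded_linear_Re] by (simp add: o_def)
  also have "\<dots> = integral II (\<lambda>x. cos (pi * x) * (cmod (TP N u x))\<^sup>2)"
  proof (rule arg_cong[where f="integral II"], rule ext)
    fix x
    have "2 * pi * (-1/2) * x = -(pi * x)" by simp
    then show "Re (ex (-1/2) x * of_real ((cmod (TP N u x))\<^sup>2)) = cos (pi * x) * (cmod (TP N u x))\<^sup>2"
      unfolding ex_cis by simp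
  qed
  finally show ?thesis .
qed

lemma coef_bound: "m < N \<Longrightarrow> cmod (u m) \<le> integral II (\<lambda>x. cmod (TP N u x))"
proof -
  assume m: "m < N"
  have "u m = integral II (\<lambda>x. TP N u x * cnj (ex (real m) x))"
    using TP_coeff[OF m, of u] unfolding IP_def by simp
  also have "cmod \<dots> \<le> integral II (\<lambda>x. cmod (TP N u x))"
    by (rule integral_norm_bound_integral) (auto intro!: integrable_II continuous_intros simp: norm_mult)
  finally show ?thesis .
qed

lemma Qlem:
  assumes u: "is_l2 u" and a: "0 < a" "a < 1/2" and l: "0 < lam" and m: "0 < \<mu>"
  shows "cmod (u k) \<le> lam / (2 * cos (pi * a)) * Re (Qf (ex (-1/2)) u) + 1 / (2 * lam) + \<mu> * nsq u + (1/2 - a) / \<mu>"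
proof -
  have fin: "cmod (u k) \<le> lam / (2 * cos (pi * a)) * Re (Qf (ex (-1/2)) (trunc N u)) + 1 / (2 * lam) + \<mu> * nsq u + (1/2 - a) / \<mu>"
    if kN: "k < N" for N
  proof -
    have "cmod (u k) \<le> integral II (\<lambda>x. cmod (TP N u x))" by (rule coef_bound[OF kN])
    also have "\<dots> \<le> lam / (2 * cos (pi * a)) * integral II (\<lambda>x. cos (pi * x) * (cmod (TP N u x))\<^sup>2)
        + 1 / (2 * lam) + \<mu> * integral II (\<lambda>x. (cmod (TP N u x))\<^sup>2) + (1/2 - a) / \<mu>"
      by (rule split_est[OF _ _ a l m]) (auto intro!: continuous_intros)
    also have "\<dots> = lam / (2 * cos (pi * a)) * Re (Qf (ex (-1/2)) (trunc N u))
        + 1 / (2 * lam) + \<mu> * (\<Sum>k<N. (cmod (u k))\<^sup>2) + (1/2 - a) / \<mu>"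
      by (simp only: Re_Q_trunc integral_TP_sq)
    finally have A: "cmod (u k) \<le> lam / (2 * cos (pi * a)) * Re (Qf (ex (-1/2)) (trunc N u))
        + 1 / (2 * lam) + \<mu> * (\<Sum>k<N. (cmod (u k))\<^sup>2) + (1/2 - a) / \<mu>" .
    have "\<mu> * (\<Sum>k<N. (cmod (u k))\<^sup>2) \<le> \<mu> * nsq u"
      using m partial_le_nsq[OF u, of "{..<N}"] by (intro mult_left_mono) auto
    with A show ?thesis by linarith
  qed
  have c: "cont (ex (-1/2))" by (intro continuous_intros)
  have lim: "(\<lambda>N. lam / (2 * cos (pi * a)) * Re (Qf (ex (-1/2)) (trunc N u)) + 1 / (2 * lam) + \<mu> * nsq u + (1/2 - a) / \<mu>)
      \<longlonglongrightarrow> lam / (2 * cos (pi * a)) * Re (Qf (ex (-1/2)) u) + 1 / (2 * lam) + \<mu> * nsq u + (1/2 - a) / \<mu>"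
    by (intro tendsto_intros Q_lim[OF c u])
  show ?thesis using fin by (intro LIMSEQ_le_const[OF lim] exI[of _ "Suc k"]) auto
qed

lemma Qeps:
  assumes e: "0 < \<epsilon>" and B: "0 \<le> B"
  shows "\<exists>\<delta>>0. \<forall>u. is_l2 u \<longrightarrow> nsq u \<le> B \<longrightarrow> Re (Qf (ex (-1/2)) u) \<le> \<delta> \<longrightarrow> (\<forall>k. cmod (u k) \<le> \<epsilon>)"
proof -
  define lam where "lam = 2 / \<epsilon>"
  define \<mu> where "\<mu> = \<epsilon> / (4 * (B + 1))"
  define r where "r = min (1/4) (\<mu> * \<epsilon> / 4)"
  define a where "a = 1/2 - r"
  define s where "s = cos (pi * a)"
  have l: "0 < lam" using e by (simp add: lam_def)
  have m: "0 < \<mu>" using e B by (simp add: \<mu>_def)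
  have r0: "0 < r" using m e by (simp add: r_def)
  have r1: "r \<le> 1/4" by (simp add: r_def)
  have a0: "0 < a" "a < 1/2" using r0 r1 by (auto simp: a_def)
  have "pi * a < pi * (1/2)" using a0 by (intro mult_strict_left_mono) auto
  moreover have "0 < pi * a" using a0 by simp
  then have "-(pi/2) < pi * a" using pi_gt_zero by linarith
  ultimately have s0: "0 < s" unfolding s_def by (intro cos_gt_zero_pi) auto
  define \<delta> where "\<delta> = \<epsilon> * s / (2 * lam)"
  have d0: "0 < \<delta>" using e s0 l by (simp add: \<delta>_def)
  have t1: "lam / (2 * s) * \<delta> = \<epsilon> / 4" using s0 l e by (simp add: \<delta>_def lam_def field_simps)
  have t2: "1 / (2 * lam) = \<epsilon> / 4" using e by (simp add: lam_def)
  have t3: "\<mu> * B \<le> \<epsilon> / 4"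
  proof -
    have "\<mu> * B = \<epsilon> / 4 * (B / (B + 1))" using B by (simp add: \<mu>_def field_simps)
    also have "\<dots> \<le> \<epsilon> / 4 * 1" using B e by (intro mult_left_mono) auto
    finally show ?thesis by simp
  qed
  have t4: "r / \<mu> \<le> \<epsilon> / 4"
  proof -
    have "r / \<mu> \<le> (\<mu> * \<epsilon> / 4) / \<mu>" using m by (intro divide_right_mono) (auto simp: r_def)
    also have "\<dots> = \<epsilon> / 4" using m by simp
    finally show ?thesis .
  qed
  have "\<forall>u. is_l2 u \<longrightarrow> nsq u \<le> B \<longrightarrow> Re (Qf (ex (-1/2)) u) \<le> \<delta> \<longrightarrow> (\<forall>k. cmod (u k) \<le> \<epsilon>)"
  proof (intro allI impI)
    fix u k assume u: "is_l2 u" and nB: "nsq u \<le> B" and Q: "Re (Qf (ex (-1/2)) u) \<le> \<delta>"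
    have "cmod (u k) \<le> lam / (2 * s) * Re (Qf (ex (-1/2)) u) + 1 / (2 * lam) + \<mu> * nsq u + (1/2 - a) / \<mu>"
      unfolding s_def by (rule Qlem[OF u a0 l m])
    moreover have "lam / (2 * s) * Re (Qf (ex (-1/2)) u) \<le> lam / (2 * s) * \<delta>"
      using Q l s0 by (intro mult_left_mono) auto
    moreover have "\<mu> * nsq u \<le> \<mu> * B" using nB m by (intro mult_left_mono) auto
    moreover have "(1/2 - a) / \<mu> = r / \<mu>" by (simp add: a_def)
    ultimately show "cmod (u k) \<le> \<epsilon>" using t1 t2 t3 t4 by linarith
  qed
  then show ?thesis using d0 by blast
qed

lemma inj_half:
  assumes u: "is_l2 u" and T0: "toeplitz (ex (-1/2)) u = (\<lambda>_. 0)"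
  shows "u = (\<lambda>_. 0)"
proof
  fix k
  have Q0: "Qf (ex (-1/2)) u = 0" unfolding Qf_def T0 by simp
  have "cmod (u k) \<le> 0 + e" if e: "0 < e" for e
  proof -
    obtain \<delta> where "\<delta> > 0" and d: "\<forall>u'. is_l2 u' \<longrightarrow> nsq u' \<le> nsq u \<longrightarrow> Re (Qf (ex (-1/2)) u') \<le> \<delta> \<longrightarrow> (\<forall>k. cmod (u' k) \<le> e)"
      using Qeps[OF e nsq_nonneg[OF u]] by blast
    then show ?thesis using u Q0 by auto
  qed
  then have "cmod (u k) \<le> 0" by (rule field_le_epsilon)
  then show "u k = 0" by simp
qed

definition e0 :: "nat \<Rightarrow> complex" where "e0 = trunc 1 (\<lambda>_. 1)"

lemma e0_l2: "is_l2 e0" unfolding e0_def by (rule l2_trunc)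
lemma e0_simps: "e0 0 = 1" "e0 (Suc j) = 0" by (auto simp: e0_def trunc_def)

lemma ker_interior:
  assumes eta: "\<bar>\<eta>\<bar> < 1/2" and p: "p \<ge> 1"
  shows "\<exists>f. is_l2 f \<and> f \<noteq> (\<lambda>_. 0) \<and> toeplitz (ex (\<eta> - real p)) f = (\<lambda>_. 0)"
proof -
  obtain f where f: "is_l2 f" "toeplitz (ex \<eta>) f = e0" using inv_pkg(2)[OF eta] e0_l2 by blast
  have "f \<noteq> (\<lambda>_. 0)"
  proof
    assume "f = (\<lambda>_. 0)"
    then have "toeplitz (ex \<eta>) f = (\<lambda>_. 0)" by (simp add: T_zero)
    then show False using f(2) e0_simps(1) by (metis zero_neq_one)
  qed
  moreover have "toeplitz (ex (\<eta> - real p)) f = (\<lambda>_. 0)"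
  proof
    fix j
    have "toeplitz (ex (\<eta> - real p)) f j = e0 (j + p)" unfolding T_downshift f(2) ..
    also have "\<dots> = 0" using p by (cases p) (auto simp: e0_simps)
    finally show "toeplitz (ex (\<eta> - real p)) f j = 0" .
  qed
  ultimately show ?thesis using f(1) by blast
qed

lemma ker_vec:
  assumes e: "0 < \<epsilon>" "\<epsilon> < 1"
  shows "\<exists>u. is_l2 u \<and> l2_norm u = 1 \<and> toeplitz (ex (-1/2 - \<epsilon>)) u = (\<lambda>_. 0)"
proof -
  have eta: "\<bar>1/2 - \<epsilon>\<bar> < 1/2" unfolding abs_less_iff using e by auto
  have eq: "-1/2 - \<epsilon> = (1/2 - \<epsilon>) - real 1" by simp
  obtain f where f: "is_l2 f" "f \<noteq> (\<lambda>_. 0)" "toeplitz (ex (-1/2 - \<epsilon>)) f = (\<lambda>_. 0)"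
    using ker_interior[OF eta, of 1] unfolding eq[symmetric] by auto
  have n0: "l2_norm f \<noteq> 0" using l2_eq_0[OF f(1)] f(2) by blast
  have np: "0 < l2_norm f" using n0 l2_norm_nonneg[OF f(1)] by linarith
  define u where "u k = of_real (1 / l2_norm f) * f k" for k
  have u: "is_l2 u" unfolding u_def[abs_def] by (rule l2_scale(1)[OF f(1)])
  have "l2_norm u = 1" unfolding u_def[abs_def] l2_scale(3)[OF f(1)] using np by (simp add: norm_divide)
  moreover have "toeplitz (ex (-1/2 - \<epsilon>)) u = (\<lambda>_. 0)"
  proof -
    have cc: "cont (ex (-1/2 - \<epsilon>))" by (intro continuous_intros)
    have "toeplitz (ex (-1/2 - \<epsilon>)) u = (\<lambda>j. of_real (1 / l2_norm f) * toeplitz (ex (-1/2 - \<epsilon>)) f j)"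
      unfolding u_def[abs_def] by (rule T_scale[OF cc f(1)])
    also have "\<dots> = (\<lambda>_. 0)" unfolding f(3) by simp
    finally show ?thesis .
  qed
  ultimately show ?thesis using u by blast
qed

lemma not_bb: "\<not> toeplitz_bounded_below (ex (-1/2 + real n))"
proof
  assume "toeplitz_bounded_below (ex (-1/2 + real n))"
  then obtain c0 where c0: "c0 > 0"
    and bb: "\<And>w. is_l2 w \<Longrightarrow> c0 * l2_norm w \<le> l2_norm (toeplitz (ex (-1/2 + real n)) w)"
    unfolding toeplitz_bounded_below_def by blast
  define c where "c = min c0 1"
  have c: "0 < c" "c \<le> 1" "c \<le> c0" using c0 by (auto simp: c_def)
  define \<epsilon>1 where "\<epsilon>1 = c / (8 * (real n + 1))"
  have e1: "0 < \<epsilon>1" using c by (simp add: \<epsilon>1_def)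
  obtain \<delta> where d0: "\<delta> > 0"
    and d: "\<And>u. is_l2 u \<Longrightarrow> nsq u \<le> 1 \<Longrightarrow> Re (Qf (ex (-1/2)) u) \<le> \<delta> \<Longrightarrow> (\<forall>k. cmod (u k) \<le> \<epsilon>1)"
    using Qeps[OF e1, of 1] by auto
  define \<epsilon> where "\<epsilon> = min (1/2) (min \<delta> (c/8)) / pi"
  have m0: "0 < min (1/2) (min \<delta> (c/8))" using d0 c by simp
  have ep: "0 < \<epsilon>" using m0 by (simp add: \<epsilon>_def)
  have pe: "pi * \<epsilon> = min (1/2) (min \<delta> (c/8))" by (simp add: \<epsilon>_def)
  have pe1: "pi * \<epsilon> \<le> \<delta>" "pi * \<epsilon> \<le> c/8" "pi * \<epsilon> \<le> 1/2" unfolding pe by auto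
  have e1': "\<epsilon> < 1"
  proof -
    have "pi * \<epsilon> < pi * 1" using pe1(3) pi_gt3 by linarith
    then show ?thesis by simp
  qed
  obtain u where u: "is_l2 u" "l2_norm u = 1" "toeplitz (ex (-1/2 - \<epsilon>)) u = (\<lambda>_. 0)"
    using ker_vec[OF ep e1'] by blast
  have nsq1: "nsq u = 1" using u(2) nsq_nonneg[OF u(1)] by (simp add: l2_norm_nsq)
  define T0 where "T0 = toeplitz (ex (-1/2))"
  have cT0: "cont (ex (-1/2))" by (intro continuous_intros)
  have cpsi: "cont (\<lambda>x. ex (-1/2) x - ex (-1/2 - \<epsilon>) x)" by (intro continuous_intros)
  have psib: "\<forall>x\<in>II. cmod (ex (-1/2) x - ex (-1/2 - \<epsilon>) x) \<le> pi * \<epsilon>"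
  proof
    fix x assume "x \<in> II"
    then have "cmod (ex (-1/2) x - ex (-1/2 - \<epsilon>) x) \<le> pi * \<bar>-1/2 - (-1/2 - \<epsilon>)\<bar>" by (rule ex_diff_bound)
    then show "cmod (ex (-1/2) x - ex (-1/2 - \<epsilon>) x) \<le> pi * \<epsilon>" using ep by simp
  qed
  have cT1: "cont (ex (-1/2 - \<epsilon>))" by (intro continuous_intros)
  have "toeplitz (\<lambda>x. ex (-1/2) x - ex (-1/2 - \<epsilon>) x) u = T0 u"
    unfolding T_symb_diff[OF cT0 cT1 u(1)] u(3) T0_def by simp
  then have Tu: "l2_norm (T0 u) \<le> pi * \<epsilon>"
    using T_bound(2)[OF cpsi psib u(1)] u(2) by simp
  have T0u: "is_l2 (T0 u)" unfolding T0_def by (rule T_l2[OF cT0 u(1)])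
  have "Re (Qf (ex (-1/2)) u) \<le> cmod (Qf (ex (-1/2)) u)" by (rule complex_Re_le_cmod)
  also have "\<dots> \<le> l2_norm (T0 u) * l2_norm (\<lambda>j. cnj (u j))"
    unfolding Qf_def T0_def by (rule cs(3)[OF T0u[unfolded T0_def] l2_cnj(1)[OF u(1)]])
  also have "\<dots> \<le> pi * \<epsilon>" using Tu by (simp add: l2_cnj u(2))
  also have "\<dots> \<le> \<delta>" by (rule pe1(1))
  finally have small: "\<forall>k. cmod (u k) \<le> \<epsilon>1" using d[OF u(1)] nsq1 by simp
  define tr where "tr = trunc n u"
  have tr: "is_l2 tr" unfolding tr_def by (rule l2_trunc)
  have trn: "l2_norm tr \<le> c / 8"
  proof -
    have "nsq tr = (\<Sum>k<n. (cmod (u k))\<^sup>2)" unfolding tr_def by (rule l2_trunc(2))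
    also have "\<dots> \<le> (\<Sum>k<n. \<epsilon>1\<^sup>2)" using small by (intro sum_mono power_mono) auto
    also have "\<dots> = real n * \<epsilon>1\<^sup>2" by simp
    also have "\<dots> \<le> (c/8)\<^sup>2"
    proof -
      have "real n * \<epsilon>1\<^sup>2 = (c/8)\<^sup>2 * (real n / (real n + 1)\<^sup>2)"
        by (simp add: \<epsilon>1_def power2_eq_square field_simps)
      also have "\<dots> \<le> (c/8)\<^sup>2 * 1"
      proof (intro mult_left_mono)
        have "real n \<le> (real n + 1)\<^sup>2" by (simp add: power2_eq_square algebra_simps)
        then show "real n / (real n + 1)\<^sup>2 \<le> 1" by simp
      qed simp
      finally show ?thesis by simp
    qed
    finally have "sqrt (nsq tr) \<le> sqrt ((c/8)\<^sup>2)" by (rule real_sqrt_le_mono)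
    then show ?thesis using c by (simp add: l2_norm_nsq)
  qed
  define w where "w k = u (k + n)" for k
  have w: "is_l2 w" using summable_iff_shift[of "\<lambda>k. (cmod (u k))\<^sup>2" n] u(1) unfolding is_l2_def w_def by simp
  have sh: "shiftR n w = (\<lambda>k. u k - tr k)" by (auto simp: fun_eq_iff shiftR_def w_def tr_def trunc_def)
  have Tw: "toeplitz (ex (-1/2 + real n)) w = (\<lambda>j. T0 u j - T0 tr j)"
    unfolding T_shift[OF w] sh T0_def by (rule T_diff[OF cT0 u(1) tr])
  have "l2_norm (toeplitz (ex (-1/2 + real n)) w) \<le> l2_norm (T0 u) + l2_norm (T0 tr)"
    unfolding Tw by (rule l2_diff(2)[OF T0u]) (unfold T0_def, rule T_l2[OF cT0 tr])
  also have "\<dots> \<le> pi * \<epsilon> + l2_norm tr"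
    using Tu T_bound(2)[OF cT0 ex_bound tr] unfolding T0_def by simp
  also have "\<dots> \<le> c / 4" using pe1(2) trn by simp
  finally have up: "l2_norm (toeplitz (ex (-1/2 + real n)) w) \<le> c / 4" .
  have utr: "is_l2 (\<lambda>k. u k - tr k)" by (rule l2_diff(1)[OF u(1) tr])
  have "1 = l2_norm (\<lambda>k. (u k - tr k) + tr k)" using u(2) by simp
  also have "\<dots> \<le> l2_norm (\<lambda>k. u k - tr k) + l2_norm tr" by (rule l2_add(2)[OF utr tr])
  also have "l2_norm (\<lambda>k. u k - tr k) = l2_norm w" using l2_shiftR(2)[OF w, of n] sh by simp
  finally have lw: "1 - c/8 \<le> l2_norm w" using trn by linarith
  have "c * l2_norm w \<le> c0 * l2_norm w" using c l2_norm_nonneg[OF w] by (intro mult_right_mono) auto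
  also have "\<dots> \<le> c / 4" using bb[OF w] up by linarith
  finally have "c * l2_norm w \<le> c / 4" .
  moreover have "c * (1 - c/8) \<le> c * l2_norm w" using lw c by (intro mult_left_mono) auto
  ultimately have "c * (1 - c/8) \<le> c / 4" by linarith
  then have "1 - c/8 \<le> 1/4" using c by (simp add: field_simps)
  then show False using c by linarith
qed

definition bh :: "nat \<Rightarrow> real" where "bh k = (1/2::real) gchoose k"

lemma bh_rec: "real (Suc k) * bh (Suc k) = (1/2 - real k) * bh k"
  using gbinomial_mult_1[of "1/2::real" k] unfolding bh_def by (simp add: algebra_simps)

lemma bh_inv: "(\<Sum>k<Suc m. \<bar>bh k\<bar>) + 2 * real (Suc m) * \<bar>bh (Suc m)\<bar> = 2"
proof (induction m)
  case 0
  then show ?case by (simp add: bh_def)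
next
  case (Suc m)
  have "real (Suc (Suc m)) * \<bar>bh (Suc (Suc m))\<bar> = \<bar>1/2 - real (Suc m)\<bar> * \<bar>bh (Suc m)\<bar>"
    using arg_cong[OF bh_rec[of "Suc m"], of abs] by (simp add: abs_mult)
  also have "\<bar>1/2 - real (Suc m)\<bar> = real m + 1/2" by simp
  finally have e: "real (Suc (Suc m)) * \<bar>bh (Suc (Suc m))\<bar> = (real m + 1/2) * \<bar>bh (Suc m)\<bar>" .
  have e2: "2 * real (Suc (Suc m)) * \<bar>bh (Suc (Suc m))\<bar> = 2 * (real m + 1/2) * \<bar>bh (Suc m)\<bar>"
    by (simp only: mult.assoc e)
  have "(\<Sum>k<Suc (Suc m). \<bar>bh k\<bar>) + 2 * real (Suc (Suc m)) * \<bar>bh (Suc (Suc m))\<bar>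
      = (\<Sum>k<Suc m. \<bar>bh k\<bar>) + \<bar>bh (Suc m)\<bar> + 2 * (real m + 1/2) * \<bar>bh (Suc m)\<bar>"
    unfolding e2 by simp
  also have "\<dots> = (\<Sum>k<Suc m. \<bar>bh k\<bar>) + 2 * real (Suc m) * \<bar>bh (Suc m)\<bar>"
    by (simp add: algebra_simps)
  finally show ?case using Suc by simp
qed

lemma bh_partial: "(\<Sum>k<n. \<bar>bh k\<bar>) \<le> 2"
proof (cases n)
  case 0 then show ?thesis by simp
next
  case (Suc m)
  have "0 \<le> 2 * real (Suc m) * \<bar>bh (Suc m)\<bar>" by simp
  then show ?thesis using bh_inv[of m] unfolding Suc by linarith
qed

lemma bh_summable: "summable (\<lambda>k. \<bar>bh k\<bar>)"
  by (rule summableI_nonneg_bounded[OF _ bh_partial]) auto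

lemma bh_le1: "\<bar>bh k\<bar> \<le> 1"
proof (cases k)
  case 0 then show ?thesis by (simp add: bh_def)
next
  case (Suc m)
  have "2 * real (Suc m) * \<bar>bh (Suc m)\<bar> \<le> 2" using bh_inv[of m] by (smt (verit) sum_nonneg abs_ge_zero)
  then have "real (Suc m) * \<bar>bh (Suc m)\<bar> \<le> 1" unfolding mult.assoc by linarith
  moreover have "\<bar>bh (Suc m)\<bar> \<le> real (Suc m) * \<bar>bh (Suc m)\<bar>" by (simp add: mult_le_cancel_right1)
  ultimately show ?thesis using Suc by simp
qed

lemma bh_vandermonde: "(\<Sum>i\<le>k. bh i * bh (k - i)) = (if k \<le> 1 then 1 else 0)"
proof -
  have "(\<Sum>i\<le>k. bh i * bh (k - i)) = (1::real) gchoose k"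
    using gbinomial_Vandermonde[of "1/2::real" "1/2" k] by (simp add: bh_def atLeast0AtMost)
  also have "(1::real) gchoose k = real (1 choose k)"
    using of_nat_gbinomial[of 1 k, where 'a=real] gbinomial_binomial[of 1 k] by simp
  also have "\<dots> = (if k \<le> 1 then 1 else 0)"
    by (cases k) (auto simp: binomial_eq_0)
  finally show ?thesis .
qed

definition fh :: "nat \<Rightarrow> complex" where "fh k = of_real (bh k)"

definition FH :: "real \<Rightarrow> complex" where "FH x = (\<Sum>k. fh k * ex (real k) x)"

lemma fh_norm_summable: "summable (\<lambda>k. cmod (fh k))"
  using bh_summable by (simp add: fh_def)

lemma fh_l2: "is_l2 fh"
  unfolding is_l2_def
proof (rule summable_comparison_test[OF _ fh_norm_summable])
  show "\<exists>N. \<forall>n\<ge>N. norm ((cmod (fh n))\<^sup>2) \<le> cmod (fh n)"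
  proof (intro exI allI impI)
    fix n
    have "(cmod (fh n))\<^sup>2 \<le> cmod (fh n) * 1"
      unfolding power2_eq_square using bh_le1[of n] by (intro mult_left_mono) (auto simp: fh_def)
    then show "norm ((cmod (fh n))\<^sup>2) \<le> cmod (fh n)" by simp
  qed
qed

lemma FH_summable: "summable (\<lambda>k. cmod (fh k * ex (real k) x))"
  using fh_norm_summable by (simp add: norm_mult)

lemma FH_sq: "(FH x)\<^sup>2 = 1 + ex 1 x"
proof -
  have s: "summable (\<lambda>k. norm (fh k * ex (real k) x))" using FH_summable by simp
  have "(FH x)\<^sup>2 = (\<Sum>k. \<Sum>i\<le>k. fh i * ex (real i) x * (fh (k - i) * ex (real (k - i)) x))"
    unfolding FH_def power2_eq_square by (rule Cauchy_product[OF s s])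
  also have "\<dots> = (\<Sum>k. of_real (if k \<le> 1 then 1 else 0) * ex (real k) x)"
  proof (rule arg_cong[where f=suminf], rule ext)
    fix k
    have "(\<Sum>i\<le>k. fh i * ex (real i) x * (fh (k - i) * ex (real (k - i)) x))
        = (\<Sum>i\<le>k. of_real (bh i * bh (k - i)) * ex (real k) x)"
    proof (rule sum.cong[OF refl])
      fix i assume "i \<in> {..k}"
      then have "ex (real i) x * ex (real (k - i)) x = ex (real k) x" by (simp add: ex_add of_nat_diff)
      then show "fh i * ex (real i) x * (fh (k - i) * ex (real (k - i)) x) = of_real (bh i * bh (k - i)) * ex (real k) x"
        by (simp add: fh_def algebra_simps)
    qed
    also have "\<dots> = of_real (\<Sum>i\<le>k. bh i * bh (k - i)) * ex (real k) x"
      by (simp add: sum_distrib_right)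
    finally show "(\<Sum>i\<le>k. fh i * ex (real i) x * (fh (k - i) * ex (real (k - i)) x)) =
        of_real (if k \<le> 1 then 1 else 0) * ex (real k) x" by (simp add: bh_vandermonde)
  qed
  also have "\<dots> = (\<Sum>k\<in>{0,1}. of_real (if k \<le> 1 then 1 else 0) * ex (real k) x)"
    by (rule suminf_finite) auto
  also have "\<dots> = 1 + ex 1 x" by simp
  finally show ?thesis .
qed

lemma FH_key:
  assumes x: "x \<in> II"
  shows "ex (-1/2) x * FH x = cnj (FH x)"
proof -
  define z where "z = ex (-1/4) x * FH x"
  have "z\<^sup>2 = ex (-1/2) x * (FH x)\<^sup>2"
    by (simp add: z_def power2_eq_square ex_add algebra_simps)
  also have "\<dots> = ex (-1/2) x + ex (1/2) x" unfolding FH_sq by (simp add: algebra_simps ex_add)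
  also have "\<dots> = of_real (2 * cos (pi * x))"
    unfolding ex_cis by (simp add: cis.ctr complex_eq_iff)
  finally have z2: "z\<^sup>2 = of_real (2 * cos (pi * x))" .
  have "-1/2 \<le> x" "x \<le> 1/2" using x by (auto simp: mem_II)
  then have "pi * (-1/2) \<le> pi * x" "pi * x \<le> pi * (1/2)"
    using mult_left_mono[of "-1/2" x pi] mult_left_mono[of x "1/2" pi] by auto
  then have "0 \<le> cos (pi * x)" by (intro cos_ge_zero) auto
  then have "Im (z\<^sup>2) = 0" "0 \<le> Re (z\<^sup>2)" unfolding z2 by simp_all
  then have h: "2 * Re z * Im z = 0" "0 \<le> (Re z)\<^sup>2 - (Im z)\<^sup>2" unfolding Re_power2 Im_power2 .
  have iz: "Im z = 0"
  proof (rule ccontr)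
    assume nz: "Im z \<noteq> 0"
    then have "Re z = 0" using h(1) by simp
    then have "(Im z)\<^sup>2 \<le> 0" using h(2) by simp
    then show False using nz by simp
  qed
  then have cz: "cnj z = z" by (simp add: complex_eq_iff)
  have F: "FH x = ex (1/4) x * z" by (simp add: z_def mult.assoc[symmetric] ex_add)
  have "ex (-1/2) x * FH x = ex (-1/4) x * z" unfolding F by (simp add: mult.assoc[symmetric] ex_add)
  also have "\<dots> = cnj (FH x)" unfolding F by (simp add: cz cnj_ex)
  finally show ?thesis .
qed

lemma TP_tendsto: "summable (\<lambda>k. cmod (f k)) \<Longrightarrow> (\<lambda>N. TP N f x) \<longlonglongrightarrow> (\<Sum>k. f k * ex (real k) x)"
proof -
  assume s: "summable (\<lambda>k. cmod (f k))"
  have "summable (\<lambda>k. f k * ex (real k) x)"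
    by (rule summable_norm_cancel) (use s in \<open>simp add: norm_mult\<close>)
  then show ?thesis unfolding TP_def by (rule summable_LIMSEQ)
qed

lemma dct_TP:
  assumes s: "summable (\<lambda>k. cmod (f k))" and c: "cont \<phi>" and b: "\<forall>x\<in>II. cmod (\<phi> x) \<le> 1"
  shows "(\<lambda>N. integral II (\<lambda>x. \<phi> x * TP N f x)) \<longlonglongrightarrow> integral II (\<lambda>x. \<phi> x * (\<Sum>k. f k * ex (real k) x))"
    "(\<lambda>N. integral II (\<lambda>x. \<phi> x * cnj (TP N f x))) \<longlonglongrightarrow> integral II (\<lambda>x. \<phi> x * cnj (\<Sum>k. f k * ex (real k) x))"
proof -
  define B where "B = (\<Sum>k. cmod (f k))"
  have TPb: "cmod (TP N f x) \<le> B" for N x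
  proof -
    have "cmod (TP N f x) \<le> (\<Sum>k<N. cmod (f k * ex (real k) x))" unfolding TP_def by (rule norm_sum)
    also have "\<dots> = (\<Sum>k<N. cmod (f k))" by (simp add: norm_mult)
    also have "\<dots> \<le> B" unfolding B_def by (rule sum_le_suminf[OF s]) auto
    finally show ?thesis .
  qed
  have B0: "0 \<le> B" using TPb[of 0 0] by (simp add: TP_def)
  have hB: "(\<lambda>x. B) integrable_on II" by (intro integrable_II continuous_intros)
  have nb: "cmod (\<phi> x * g) \<le> B" if "x \<in> II" "cmod g \<le> B" for x g
  proof -
    have "cmod (\<phi> x * g) = cmod (\<phi> x) * cmod g" by (rule norm_mult)
    also have "\<dots> \<le> 1 * B" using b that B0 by (intro mult_mono) auto
    finally show ?thesis by simp
  qed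
  show "(\<lambda>N. integral II (\<lambda>x. \<phi> x * TP N f x)) \<longlonglongrightarrow> integral II (\<lambda>x. \<phi> x * (\<Sum>k. f k * ex (real k) x))"
  proof (rule dominated_convergence(2)[where h="\<lambda>x. B"])
    show "\<And>N. (\<lambda>x. \<phi> x * TP N f x) integrable_on II" using c by (intro integrable_II continuous_intros)
    show "(\<lambda>x. B) integrable_on II" by (rule hB)
    show "\<And>N x. x \<in> II \<Longrightarrow> norm (\<phi> x * TP N f x) \<le> B" using nb TPb by simp
    show "\<And>x. x \<in> II \<Longrightarrow> (\<lambda>N. \<phi> x * TP N f x) \<longlonglongrightarrow> \<phi> x * (\<Sum>k. f k * ex (real k) x)"
      by (intro tendsto_intros TP_tendsto s)
  qed
  show "(\<lambda>N. integral II (\<lambda>x. \<phi> x * cnj (TP N f x))) \<longlonglongrightarrow> integral II (\<lambda>x. \<phi> x * cnj (\<Sum>k. f k * ex (real k) x))"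
  proof (rule dominated_convergence(2)[where h="\<lambda>x. B"])
    show "\<And>N. (\<lambda>x. \<phi> x * cnj (TP N f x)) integrable_on II" using c by (intro integrable_II continuous_intros)
    show "(\<lambda>x. B) integrable_on II" by (rule hB)
    show "\<And>N x. x \<in> II \<Longrightarrow> norm (\<phi> x * cnj (TP N f x)) \<le> B" using nb TPb by simp
    show "\<And>x. x \<in> II \<Longrightarrow> (\<lambda>N. \<phi> x * cnj (TP N f x)) \<longlonglongrightarrow> \<phi> x * cnj (\<Sum>k. f k * ex (real k) x)"
      by (intro tendsto_intros TP_tendsto s)
  qed
qed

lemma ker_half:
  assumes p: "p \<ge> 1"
  shows "\<exists>f. is_l2 f \<and> f \<noteq> (\<lambda>_. 0) \<and> toeplitz (ex (-1/2 - real p)) f = (\<lambda>_. 0)"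
proof -
  define \<xi> where "\<xi> = -1/2 - real p"
  have c\<xi>: "cont (ex \<xi>)" by (intro continuous_intros)
  have nz: "fh \<noteq> (\<lambda>_. 0)"
  proof
    assume "fh = (\<lambda>_. 0)"
    then have "fh 0 = 0" by (rule fun_cong)
    then show False by (simp add: fh_def bh_def)
  qed
  have "toeplitz (ex \<xi>) fh j = 0" for j
  proof -
    define \<phi> where "\<phi> x = ex \<xi> x * cnj (ex (real j) x)" for x
    define \<phi>' where "\<phi>' x = ex (- real p) x * cnj (ex (real j) x)" for x
    have c\<phi>: "cont \<phi>" "cont \<phi>'" unfolding \<phi>_def[abs_def] \<phi>'_def[abs_def] by (intro continuous_intros)+
    have b\<phi>: "\<forall>x\<in>II. cmod (\<phi> x) \<le> 1" "\<forall>x\<in>II. cmod (\<phi>' x) \<le> 1"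
      by (auto simp: \<phi>_def \<phi>'_def norm_mult)
    have L1: "(\<lambda>N. toeplitz (ex \<xi>) (trunc N fh) j) \<longlonglongrightarrow> toeplitz (ex \<xi>) fh j"
      by (rule T_trunc_lim[OF c\<xi> fh_l2])
    have eqN: "toeplitz (ex \<xi>) (trunc N fh) j = integral II (\<lambda>x. \<phi> x * TP N fh x)" for N
      unfolding toeplitz_trunc_IP[OF c\<xi>] IP_def \<phi>_def by (simp add: ac_simps)
    have L2: "(\<lambda>N. toeplitz (ex \<xi>) (trunc N fh) j) \<longlonglongrightarrow> integral II (\<lambda>x. \<phi> x * FH x)"
      unfolding eqN FH_def by (rule dct_TP(1)[OF fh_norm_summable c\<phi>(1) b\<phi>(1)])
    have "toeplitz (ex \<xi>) fh j = integral II (\<lambda>x. \<phi> x * FH x)" using LIMSEQ_unique[OF L1 L2] .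
    also have "\<dots> = integral II (\<lambda>x. \<phi>' x * cnj (FH x))"
    proof (rule integral_cong)
      fix x assume x: "x \<in> II"
      have "ex \<xi> x = ex (- real p + -1/2) x"
        by (rule arg_cong[where f="\<lambda>t. ex t x"]) (simp add: \<xi>_def)
      also have "\<dots> = ex (- real p) x * ex (-1/2) x" by (simp only: ex_add)
      finally have "ex \<xi> x = ex (- real p) x * ex (-1/2) x" .
      then show "\<phi> x * FH x = \<phi>' x * cnj (FH x)"
        unfolding \<phi>_def \<phi>'_def using FH_key[OF x] by (simp add: ac_simps)
    qed
    also have "\<dots> = 0"
    proof -
      have L3: "(\<lambda>N. integral II (\<lambda>x. \<phi>' x * cnj (TP N fh x))) \<longlonglongrightarrow> integral II (\<lambda>x. \<phi>' x * cnj (FH x))"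
        unfolding FH_def by (rule dct_TP(2)[OF fh_norm_summable c\<phi>(2) b\<phi>(2)])
      have z: "integral II (\<lambda>x. \<phi>' x * cnj (TP N fh x)) = 0" for N
      proof -
        have "integral II (\<lambda>x. \<phi>' x * cnj (TP N fh x)) = IP (ex (- real p)) (\<lambda>x. \<Sum>k<N. fh k * ex (real (j + k)) x)"
        proof -
          have "\<phi>' x * cnj (TP N fh x) = ex (- real p) x * cnj (\<Sum>k<N. fh k * ex (real (j + k)) x)" for x
          proof -
            have "ex (real j) x * TP N fh x = (\<Sum>k<N. fh k * ex (real (j + k)) x)"
              unfolding TP_def sum_distrib_left by (rule sum.cong) (auto simp: ex_add[symmetric] ac_simps)
            then show ?thesis unfolding \<phi>'_def by (metis complex_cnj_mult mult.assoc)
          qed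
          then show ?thesis unfolding IP_def by simp
        qed
        also have "\<dots> = (\<Sum>k<N. cnj (fh k) * IP (ex (- real p)) (ex (real (j + k))))"
          by (rule IP_sum_right) (auto intro!: continuous_intros)
        also have "\<dots> = 0"
        proof (rule sum.neutral, rule ballI)
          fix k
          have ne: "- int p \<noteq> int (j + k)" using p by simp
          have "IP (ex (of_int (- int p))) (ex (of_int (int (j + k)))) = 0"
            unfolding IP_ex using ne by (simp only: if_False)
          then show "cnj (fh k) * IP (ex (- real p)) (ex (real (j + k))) = 0" by simp
        qed
        finally show ?thesis .
      qed
      have "(\<lambda>N. 0::complex) \<longlonglongrightarrow> integral II (\<lambda>x. \<phi>' x * cnj (FH x))" using L3 unfolding z .
      from LIMSEQ_unique[OF tendsto_const this] show ?thesis by (rule sym)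
    qed
    finally show ?thesis .
  qed
  then show ?thesis using fh_l2 nz unfolding \<xi>_def by blast
qed

lemma bb_inj:
  assumes c: "cont \<phi>" and c0: "0 < c" and bb: "\<forall>u. is_l2 u \<longrightarrow> c * l2_norm u \<le> l2_norm (toeplitz \<phi> u)"
    and f: "is_l2 f" and g: "is_l2 g" and eq: "toeplitz \<phi> f = toeplitz \<phi> g"
  shows "f = g"
proof -
  have d: "is_l2 (\<lambda>k. f k - g k)" by (rule l2_diff(1)[OF f g])
  have z: "toeplitz \<phi> (\<lambda>k. f k - g k) = (\<lambda>j. 0)" using T_diff[OF c f g] eq by simp
  have "c * l2_norm (\<lambda>k. f k - g k) \<le> l2_norm (toeplitz \<phi> (\<lambda>k. f k - g k))" using bb d by blast
  also have "\<dots> = 0" unfolding z by (rule l2_zero(3))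
  finally have "c * l2_norm (\<lambda>k. f k - g k) \<le> 0" .
  moreover have "0 \<le> l2_norm (\<lambda>k. f k - g k)" by (rule l2_norm_nonneg[OF d])
  ultimately have "l2_norm (\<lambda>k. f k - g k) = 0"
    using mult_pos_pos[OF c0, of "l2_norm (\<lambda>k. f k - g k)"] by linarith
  then have "(\<lambda>k. f k - g k) = (\<lambda>_. 0)" by (rule l2_eq_0[OF d])
  then show ?thesis by (auto simp: fun_eq_iff dest: fun_cong)
qed

lemma shiftR_zero: "shiftR n w = (\<lambda>_. 0) \<Longrightarrow> w = (\<lambda>_. 0)"
proof
  fix k assume "shiftR n w = (\<lambda>_. 0)"
  then have "shiftR n w (k + n) = 0" by simp
  then show "w k = 0" by (simp add: shiftR_def)
qed

lemma part1:
  assumes "\<xi> < -1/2"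
  shows "\<not> toeplitz_injective (ex \<xi>)"
proof -
  define m where "m = \<lfloor>\<xi> + 1/2\<rfloor>"
  have m1: "of_int m \<le> \<xi> + 1/2" "\<xi> + 1/2 < of_int m + 1" unfolding m_def by linarith+
  have mneg: "m \<le> -1" using m1 assms by linarith
  define p where "p = nat (- m)"
  have p1: "p \<ge> 1" using mneg by (simp add: p_def)
  have rp: "real p = - of_int m" using mneg by (simp add: p_def)
  have "\<exists>f. is_l2 f \<and> f \<noteq> (\<lambda>_. 0) \<and> toeplitz (ex \<xi>) f = (\<lambda>_. 0)"
  proof (cases "\<xi> + 1/2 = of_int m")
    case True
    then have "\<xi> = -1/2 - real p" using rp by linarith
    then show ?thesis using ker_half[OF p1] by simp
  next
    case False
    define \<eta> where "\<eta> = \<xi> + real p"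
    have lt: "of_int m < \<xi> + 1/2" using le_neq_trans[OF m1(1)] False by metis
    have "-1/2 < \<eta>" "\<eta> < 1/2" using lt m1(2) rp unfolding \<eta>_def by linarith+
    then have "\<bar>\<eta>\<bar> < 1/2" by (auto simp: abs_less_iff)
    moreover have "\<xi> = \<eta> - real p" by (simp add: \<eta>_def)
    ultimately show ?thesis using ker_interior[of \<eta> p] p1 by simp
  qed
  then show ?thesis unfolding toeplitz_injective_def by blast
qed

lemma part3:
  "toeplitz_injective (ex (-1/2 + real n)) \<and> \<not> toeplitz_bounded_below (ex (-1/2 + real n))"
proof
  show "toeplitz_injective (ex (-1/2 + real n))"
    unfolding toeplitz_injective_def
  proof (intro allI impI)
    fix w assume w: "is_l2 w \<and> toeplitz (ex (-1/2 + real n)) w = (\<lambda>_. 0)"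
    then have "toeplitz (ex (-1/2)) (shiftR n w) = (\<lambda>_. 0)" using T_shift[of w "-1/2" n] by simp
    then have "shiftR n w = (\<lambda>_. 0)" using inj_half l2_shiftR(1) w by blast
    then show "w = (\<lambda>_. 0)" by (rule shiftR_zero)
  qed
  show "\<not> toeplitz_bounded_below (ex (-1/2 + real n))" by (rule not_bb)
qed

lemma part4:
  assumes "\<xi> > 1/2" and nh: "\<forall>n::nat. \<xi> \<noteq> -1/2 + real n"
  shows "toeplitz_injective (ex \<xi>) \<and> toeplitz_bounded_below (ex \<xi>) \<and> \<not> toeplitz_surjective (ex \<xi>)"
proof -
  define m where "m = \<lfloor>\<xi> + 1/2\<rfloor>"
  have m1: "of_int m \<le> \<xi> + 1/2" "\<xi> + 1/2 < of_int m + 1" unfolding m_def by linarith+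
  have mpos: "m \<ge> 1" using m1 assms(1) by linarith
  define n where "n = nat m"
  have n1: "n \<ge> 1" using mpos by (simp add: n_def)
  have rn: "real n = of_int m" using mpos by (simp add: n_def)
  have ne: "\<xi> + 1/2 \<noteq> of_int m" using nh[rule_format, of n] rn by auto
  define \<eta> where "\<eta> = \<xi> - real n"
  have lt: "of_int m < \<xi> + 1/2" using le_neq_trans[OF m1(1)] ne by metis
  have "-1/2 < \<eta>" "\<eta> < 1/2" using lt m1(2) rn unfolding \<eta>_def by linarith+
  then have eta: "\<bar>\<eta>\<bar> < 1/2" by (auto simp: abs_less_iff)
  have xi: "\<xi> = \<eta> + real n" by (simp add: \<eta>_def)
  have c: "cont (ex \<eta>)" by (intro continuous_intros)
  obtain c0 where c0: "c0 > 0" and bb: "\<forall>u. is_l2 u \<longrightarrow> c0 * l2_norm u \<le> l2_norm (toeplitz (ex \<eta>) u)"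
    using inv_pkg(1)[OF eta] by blast
  have Tx: "toeplitz (ex \<xi>) w = toeplitz (ex \<eta>) (shiftR n w)" if "is_l2 w" for w
    unfolding xi by (rule T_shift[OF that])
  have inj: "toeplitz_injective (ex \<xi>)"
    unfolding toeplitz_injective_def
  proof (intro allI impI)
    fix w assume w: "is_l2 w \<and> toeplitz (ex \<xi>) w = (\<lambda>_. 0)"
    then have "toeplitz (ex \<eta>) (shiftR n w) = toeplitz (ex \<eta>) (\<lambda>_. 0)"
      using Tx[of w] T_zero[of "ex \<eta>"] by simp
    then have "shiftR n w = (\<lambda>_. 0)" using bb_inj[OF c c0 bb l2_shiftR(1) l2_zero(1)] w by blast
    then show "w = (\<lambda>_. 0)" by (rule shiftR_zero)
  qed
  have bbx: "toeplitz_bounded_below (ex \<xi>)"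
    unfolding toeplitz_bounded_below_def
  proof (intro exI[of _ c0] conjI allI impI c0)
    fix w assume w: "is_l2 w"
    have "c0 * l2_norm w = c0 * l2_norm (shiftR n w)" using l2_shiftR(2)[OF w] by simp
    also have "\<dots> \<le> l2_norm (toeplitz (ex \<eta>) (shiftR n w))" using bb l2_shiftR(1)[OF w] by blast
    also have "\<dots> = l2_norm (toeplitz (ex \<xi>) w)" using Tx[OF w] by simp
    finally show "c0 * l2_norm w \<le> l2_norm (toeplitz (ex \<xi>) w)" .
  qed
  have nsurj: "\<not> toeplitz_surjective (ex \<xi>)"
  proof
    assume "toeplitz_surjective (ex \<xi>)"
    moreover have "is_l2 (toeplitz (ex \<eta>) e0)" by (rule T_l2[OF c e0_l2])
    ultimately obtain w where w: "is_l2 w" "toeplitz (ex \<xi>) w = toeplitz (ex \<eta>) e0"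
      unfolding toeplitz_surjective_def by blast
    then have "toeplitz (ex \<eta>) (shiftR n w) = toeplitz (ex \<eta>) e0" using Tx by simp
    then have "shiftR n w = e0" using bb_inj[OF c c0 bb l2_shiftR(1)[OF w(1)] e0_l2] by blast
    then have "shiftR n w 0 = e0 0" by simp
    then show False using n1 by (simp add: shiftR_def e0_simps)
  qed
  show ?thesis using inj bbx nsurj by blast
qed

theorem theorem1p2:
  fixes \<xi> :: real
  shows "(\<xi> < -1/2 \<longrightarrow> \<not> toeplitz_injective (g_sym \<xi>))
   \<and> (-1/2 < \<xi> \<and> \<xi> < 1/2 \<longrightarrow> toeplitz_invertible (g_sym \<xi>))
   \<and> ((\<exists>n::nat. \<xi> = -1/2 + real n) \<longrightarrow>
        toeplitz_injective (g_sym \<xi>) \<and> \<not> toeplitz_bounded_below (g_sym \<xi>))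
   \<and> (\<xi> > 1/2 \<and> (\<forall>n::nat. \<xi> \<noteq> -1/2 + real n) \<longrightarrow>
        toeplitz_injective (g_sym \<xi>) \<and> toeplitz_bounded_below (g_sym \<xi>)
        \<and> \<not> toeplitz_surjective (g_sym \<xi>))"
  unfolding g_sym_ex
proof (intro conjI impI)
  show "\<xi> < -1/2 \<Longrightarrow> \<not> toeplitz_injective (ex \<xi>)" by (rule part1)
  show "-1/2 < \<xi> \<and> \<xi> < 1/2 \<Longrightarrow> toeplitz_invertible (ex \<xi>)"
    by (intro inv_pkg(3)) (auto simp: abs_less_iff)
  show "\<exists>n::nat. \<xi> = -1/2 + real n \<Longrightarrow> toeplitz_injective (ex \<xi>)" using part3 by blast
  show "\<exists>n::nat. \<xi> = -1/2 + real n \<Longrightarrow> \<not> toeplitz_bounded_below (ex \<xi>)" using part3 by blast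
  show "1/2 < \<xi> \<and> (\<forall>n::nat. \<xi> \<noteq> -1/2 + real n) \<Longrightarrow> toeplitz_injective (ex \<xi>)" using part4 by blast
  show "1/2 < \<xi> \<and> (\<forall>n::nat. \<xi> \<noteq> -1/2 + real n) \<Longrightarrow> toeplitz_bounded_below (ex \<xi>)" using part4 by blast
  show "1/2 < \<xi> \<and> (\<forall>n::nat. \<xi> \<noteq> -1/2 + real n) \<Longrightarrow> \<not> toeplitz_surjective (ex \<xi>)" using part4 by blast
qed

end
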